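(* Under the hypotheses and notation of the context, the limit $\bar\Psi(+\infty)=\lim_{t\to+\infty}\bar\Psi(t)$ exists and $$\bar\Psi(+\infty)\in\Big\{0,\ -\tfrac{p-1}{2(p+1)}(k^2+l^2)\sigma_0^{\frac{p+1}{p-1}}\Big\},$$ where $k,l\ge0$ are not both $0$ and satisfy $\mu_1k^{2q}+\beta k^{q-1}l^{q+1}=1$, $\mu_2l^{2q}+\beta l^{q-1}k^{q+1}=1$ (if one of $k,l$ is $0$, say $k=0$, this is understood as $\mu_2l^{2q}=1$, and symmetrically).
   Context: Let $n\ge3$, $\mu_1,\mu_2,\beta>0$, $p=2q+1$ with $\frac{n}{n-2}<p<\frac{n+2}{n-2}$, and $(u,v)$ a nonnegative radial $C^2(\mathbb{R}^n\setminus\{0\})$ solution of $-\Delta u=\mu_1u^{2q+1}+\beta u^qv^{q+1}$, $-\Delta v=\mu_2v^{2q+1}+\beta v^qu^{q+1}$ in $\mathbb{R}^n\setminus\{0\}$. $\bar u(x)=|x|^{2-n}u(x/|x|^2)$, $\bar v(x)=|x|^{2-n}v(x/|x|^2)$, $\alpha=p(n-2)-(n+2)$, $\delta_0=\frac{2+\alpha}{p-1}$, $\bar w_1(t)=e^{-\delta_0t}\bar u(e^{-t})$, $\bar w_2(t)=e^{-\delta_0t}\bar v(e^{-t})$, $\sigma_0=\frac{(2+\alpha)(n-2)}{(p-1)^2}\big(p-\frac{n+\alpha}{n-2}\big)$, and $$\bar\Psi(t)=\tfrac12\big(|\bar w_1'|^2+|\bar w_2'|^2-\sigma_0(\bar w_1^2+\bar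 w_2^2)\big)+\tfrac1{p+1}\big(\mu_1\bar w_1^{p+1}+2\beta\bar w_1^{q+1}\bar w_2^{q+1}+\mu_2\bar w_2^{p+1}\big).$$ *)

theory Defs
  imports "HOL-Analysis.Analysis"
begin

definition partial :: "'n::finite \<Rightarrow> (real^'n \<Rightarrow> real) \<Rightarrow> real^'n \<Rightarrow> real" where
  "partial i f x = deriv (\<lambda>t. f (x + t *\<^sub>R axis i 1)) 0"

definition partial_exists :: "'n::finite \<Rightarrow> (real^'n \<Rightarrow> real) \<Rightarrow> real^'n \<Rightarrow> bool" where
  "partial_exists i f x \<longleftrightarrow> (\<lambda>t. f (x + t *\<^sub>R axis i 1)) differentiable (at 0)"

definition C2_on :: "(real^'n::finite) set \<Rightarrow> (real^'n \<Rightarrow> real) \<Rightarrow> bool" where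
  "C2_on S f \<longleftrightarrow> continuous_on S f \<and>
     (\<forall>i. (\<forall>x\<in>S. partial_exists i f x) \<and> continuous_on S (partial i f)) \<and>
     (\<forall>i j. (\<forall>x\<in>S. partial_exists j (partial i f) x) \<and>
            continuous_on S (partial j (partial i f)))"

definition laplacian :: "(real^'n::finite \<Rightarrow> real) \<Rightarrow> real^'n \<Rightarrow> real" where
  "laplacian f x = (\<Sum>i\<in>UNIV. partial i (partial i f) x)"

definition radial :: "(real^'n::finite \<Rightarrow> real) \<Rightarrow> bool" where
  "radial f \<longleftrightarrow> (\<exists>U. \<forall>x. x \<noteq> 0 \<longrightarrow> f x = U (norm x))"

definition kelvin :: "(real^'n::finite \<Rightarrow> real) \<Rightarrow> real^'n \<Rightarrow> real" where
  "kelvin f x = norm x powr (2 - real CARD('n)) * f ((1 / (norm x)\<^sup>2) *\<^sub>R x)"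

text \<open>A fixed unit vector; the radial function ubar(r) means ubar at any point of norm r.\<close>
definition unitv :: "real^'n::finite" where
  "unitv = axis (SOME i. True) 1"

definition wbar :: "real \<Rightarrow> (real^'n::finite \<Rightarrow> real) \<Rightarrow> real \<Rightarrow> real" where
  "wbar \<delta>\<^sub>0 f t = exp (- \<delta>\<^sub>0 * t) * kelvin f (exp (- t) *\<^sub>R (unitv :: real^'n))"

end

theory Submission
  imports Defs
begin

lemma DERIV_powr_nonneg:
  fixes f :: "real \<Rightarrow> real"
  assumes r: "r > 1" and nn: "\<And>y. f y \<ge> 0" and d: "DERIV f x :> f'"
  shows "DERIV (\<lambda>y. f y powr r) x :> r * f x powr (r - 1) * f'"
proof (cases "f x = 0")
  case False
  then have "f x > 0" using nn[of x] by auto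
  from DERIV_fun_powr[OF d this, of r] show ?thesis by simp
next
  case True
  from d obtain g where g: "\<And>z. f z - f x = g z * (z - x)" "isCont g x" "g x = f'"
    using CARAT_DERIV by blast
  have cf: "isCont f x" using d by (rule DERIV_isCont)
  have c2: "isCont (\<lambda>y. f y powr (r - 1)) x"
    unfolding continuous_at
    by (rule tendsto_powr') (use cf r nn in \<open>auto simp: continuous_at\<close>)
  have "DERIV (\<lambda>y. f y powr r) x :> g x * f x powr (r - 1)"
    unfolding CARAT_DERIV
  proof (intro exI conjI allI)
    fix z
    have "f z powr r = f z * f z powr (r - 1)"
      using powr_mult_base[OF nn[of z], of "r - 1"] by simp
    then show "f z powr r - f x powr r = (g z * f z powr (r - 1)) * (z - x)"
      using g(1)[of z] True by simp
    show "isCont (\<lambda>z. g z * f z powr (r - 1)) x" using g(2) c2 by (rule isCont_mult)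
  qed simp
  then show ?thesis using True g r by simp
qed

lemma G_ineq:
  fixes y H c p \<sigma> :: real
  assumes "0 \<le> y" "y \<le> H" "c > 0" "p > 1"
  shows "(\<sigma>*y\<^sup>2/2 - c * y powr (p+1)/(p+1)) - (\<sigma>*H\<^sup>2/2 - c * H powr (p+1)/(p+1))
         \<ge> (H\<^sup>2 - y\<^sup>2) * (c * H powr (p-1)/(p+1) - \<sigma>/2)"
proof -
  have H0: "H \<ge> 0" using assms by linarith
  have e1: "y powr (p+1) = y powr (p-1) * y\<^sup>2"
  proof -
    have "y powr (p+1) = y powr (p-1) * y powr 2" by (simp add: powr_add[symmetric] add.commute)
    then show ?thesis using assms(1) by simp
  qed
  have e2: "H powr (p+1) = H powr (p-1) * H\<^sup>2"
  proof -
    have "H powr (p+1) = H powr (p-1) * H powr 2" by (simp add: powr_add[symmetric] add.commute)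
    then show ?thesis using H0 by simp
  qed
  have m: "y powr (p-1) \<le> H powr (p-1)" using assms by (intro powr_mono2) auto
  have "y powr (p-1) * y\<^sup>2 \<le> H powr (p-1) * y\<^sup>2" using m by (simp add: mult_right_mono)
  then have "c * (H powr (p+1) - y powr (p+1)) \<ge> c * (H powr (p-1) * (H\<^sup>2 - y\<^sup>2))"
    using assms(3) unfolding e1 e2 by (intro mult_left_mono) (auto simp: algebra_simps)
  then have "c * (H powr (p+1) - y powr (p+1)) / (p+1) \<ge> c * (H powr (p-1) * (H\<^sup>2 - y\<^sup>2)) / (p+1)"
    using assms(4) by (intro divide_right_mono) auto
  moreover have "(\<sigma>*y\<^sup>2/2 - c * y powr (p+1)/(p+1)) - (\<sigma>*H\<^sup>2/2 - c * H powr (p+1)/(p+1))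
     = \<sigma>*(y\<^sup>2 - H\<^sup>2)/2 + c * (H powr (p+1) - y powr (p+1)) / (p+1)"
    by (simp add: algebra_simps diff_divide_distrib add_divide_distrib)
  moreover have "(H\<^sup>2 - y\<^sup>2) * (c * H powr (p-1)/(p+1) - \<sigma>/2)
     = c * (H powr (p-1) * (H\<^sup>2 - y\<^sup>2)) / (p+1) + \<sigma>*(y\<^sup>2 - H\<^sup>2)/2"
    by (simp add: algebra_simps diff_divide_distrib add_divide_distrib)
  ultimately show ?thesis by linarith
qed

lemma falling:
  fixes z z' z'' :: "real \<Rightarrow> real" and b \<sigma> c p s :: real
  assumes b: "b > 0" and \<sigma>: "\<sigma> > 0" and c: "c > 0" and p: "p > 1"
    and nn: "\<And>t. z t \<ge> 0"
    and d1: "\<And>t. DERIV z t :> z' t"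
    and d2: "\<And>t. DERIV z' t :> z'' t"
    and ineq: "\<And>t. z'' t \<le> b * z' t + \<sigma> * z t - c * z t powr p"
    and zs: "z' s = 0"
    and big: "c * z s powr (p-1) \<ge> \<sigma> * (p+1)"
  shows False
proof -
  define H where "H = z s"
  have "\<sigma>*(p+1) > 0" using \<sigma> p by simp
  then have "H \<noteq> 0" using big H_def by auto
  then have Hpos: "H > 0" using nn[of s] H_def by simp
  have Hp: "H powr p = H * H powr (p-1)"
    using powr_mult_base[of H "p-1"] Hpos by simp
  have "\<sigma>*(p+1) > \<sigma>" using \<sigma> p by (simp add: algebra_simps)
  then have "c * H powr (p-1) > \<sigma>" using big unfolding H_def by linarith
  then have "H * (c * H powr (p-1)) > H * \<sigma>" using Hpos by simp
  then have zs2: "z'' s < 0" using ineq[of s] zs Hp H_def by (simp add: algebra_simps)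
  from DERIV_neg_dec_right[OF d2 zs2] obtain d where d: "d > 0" "\<And>h. h > 0 \<Longrightarrow> h < d \<Longrightarrow> z' (s + h) < 0"
    using zs by auto
  define s1 where "s1 = s + d/2"
  have zs1: "z' s1 < 0" using d unfolding s1_def by auto
  have le_s: "z' t \<le> 0" if "s \<le> t" "t \<le> s1" for t
  proof (cases "t = s")
    case True then show ?thesis using zs by simp
  next
    case False then show ?thesis using d(2)[of "t - s"] that unfolding s1_def by auto
  qed
  have zdec: "z s1 < z s"
  proof -
    have "s < s1" using d s1_def by simp
    from MVT2[OF this, of z z'] d1 obtain \<xi> where "s < \<xi>" "\<xi> < s1" "z s1 - z s = (s1 - s) * z' \<xi>"
      by blast
    moreover have "z' \<xi> < 0" using d(2)[of "\<xi> - s"] \<open>s < \<xi>\<close> \<open>\<xi> < s1\<close> s1_def by auto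
    moreover have "(s1 - s) * z' \<xi> < 0" using \<open>s < s1\<close> \<open>z' \<xi> < 0\<close> by (intro mult_pos_neg) auto
    ultimately show ?thesis by linarith
  qed
  define G where "G y = \<sigma>*y\<^sup>2/2 - c * y powr (p+1)/(p+1)" for y
  define E where "E t = (z' t)\<^sup>2/2 - G (z t)" for t
  have dE: "DERIV E t :> z' t * z'' t - (\<sigma> * z t * z' t - c * z t powr p * z' t)" for t
  proof -
    have "DERIV (\<lambda>t. z t powr (p+1)) t :> (p+1) * z t powr (p+1-1) * z' t"
      using DERIV_powr_nonneg[of "p+1" z, OF _ nn d1] p by auto
    then have a: "DERIV (\<lambda>t. z t powr (p+1)) t :> (p+1) * z t powr p * z' t" by simp
    have s1: "DERIV (\<lambda>x. (z' x)\<^sup>2) t :> 2 * z' t * z'' t"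
      using DERIV_power[OF d2[of t], of 2] by (simp add: mult.commute mult.left_commute)
    have s2: "DERIV (\<lambda>x. (z x)\<^sup>2) t :> 2 * z t * z' t"
      using DERIV_power[OF d1[of t], of 2] by (simp add: mult.commute mult.left_commute)
    have "DERIV (\<lambda>t. (z' t)\<^sup>2/2 - (\<sigma>*(z t)\<^sup>2/2 - c * z t powr (p+1)/(p+1))) t :> 
       (2 * z' t * z'' t)/2 - (\<sigma>*(2 * z t * z' t)/2 - c * ((p+1) * z t powr p * z' t)/(p+1))"
      by (intro DERIV_diff DERIV_cdivide DERIV_cmult s1 s2 a) 
    moreover have "(2 * z' t * z'' t)/2 - (\<sigma>*(2 * z t * z' t)/2 - c * ((p+1) * z t powr p * z' t)/(p+1))
       = z' t * z'' t - (\<sigma> * z t * z' t - c * z t powr p * z' t)" using p by (simp add: field_simps)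
    ultimately show ?thesis unfolding E_def G_def by (simp only:)
  qed
  have dEnn: "z' t * z'' t - (\<sigma> * z t * z' t - c * z t powr p * z' t) \<ge> 0" if "z' t \<le> 0" for t
  proof -
    have "z'' t - \<sigma> * z t + c * z t powr p \<le> b * z' t" using ineq[of t] by simp
    then have "z' t * (z'' t - \<sigma> * z t + c * z t powr p) \<ge> z' t * (b * z' t)"
      using that by (simp add: mult_left_mono_neg)
    moreover have "z' t * (b * z' t) \<ge> 0" using b by (simp add: mult.left_commute[of "z' t" b])
    ultimately show ?thesis by (simp add: algebra_simps)
  qed
  have Emono: "E s \<le> E t" if "s \<le> t" "\<And>x. s \<le> x \<Longrightarrow> x \<le> t \<Longrightarrow> z' x \<le> 0" for t
    using that(1) by (rule DERIV_nonneg_imp_nondecreasing) (use dE dEnn that(2) in blast)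
  have zmono: "z t \<le> z a" if "a \<le> t" "\<And>x. a \<le> x \<Longrightarrow> x \<le> t \<Longrightarrow> z' x \<le> 0" for a t
    using that(1) by (rule DERIV_nonpos_imp_nonincreasing) (use d1 that(2) in blast)
  have cont: "continuous_on UNIV z'" using d2 by (intro DERIV_continuous_on) auto
  have "c * H powr (p-1)/(p+1) \<ge> \<sigma>"
    using big H_def p by (simp add: field_simps)
  then have kappa: "c * H powr (p-1)/(p+1) - \<sigma>/2 > 0" using \<sigma> by linarith
  have EsG: "E s = - G H" unfolding E_def H_def using zs by simp
  have claimA: "\<forall>t\<ge>s1. z' t < 0"
  proof (rule ccontr)
    assume nA: "\<not> ?thesis"
    define S where "S = {t. s1 \<le> t \<and> 0 \<le> z' t}"
    have Sne: "S \<noteq> {}" using nA S_def by force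
    have Sbdd: "bdd_below S" unfolding S_def by (rule bdd_belowI[of _ s1]) auto
    have Scl: "closed S"
    proof -
      have "S = {t. s1 \<le> t} \<inter> {t. (\<lambda>_. 0) t \<le> z' t}" unfolding S_def by auto
      moreover have "closed {t. (\<lambda>_. 0::real) t \<le> z' t}"
        by (rule closed_Collect_le) (auto intro: cont)
      ultimately show ?thesis by (auto intro: closed_Int simp: closed_atLeast[unfolded atLeast_def])
    qed
    define T where "T = Inf S"
    have TS: "T \<in> S" unfolding T_def using closed_contains_Inf[OF Sne Sbdd Scl] .
    have below: "z' t < 0" if "s1 \<le> t" "t < T" for t
    proof (rule ccontr)
      assume "\<not> z' t < 0"
      then have "t \<in> S" using that S_def by auto
      then have "T \<le> t" unfolding T_def using Sbdd by (rule cInf_lower)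
      then show False using that by simp
    qed
    have Ts1: "s1 < T" using TS zs1 S_def by (cases "T = s1") auto
    have zT: "z' T = 0"
    proof (rule ccontr)
      assume "z' T \<noteq> 0"
      then have pos: "z' T > 0" using TS S_def by auto
      have "z' \<midarrow>T\<rightarrow> z' T" using cont by (simp add: continuous_on_eq_continuous_at isContD)
      from LIM_fun_gt_zero[OF this pos] obtain r where r: "r > 0" "\<And>x. x \<noteq> T \<Longrightarrow> \<bar>T - x\<bar> < r \<Longrightarrow> 0 < z' x"
        by blast
      define t' where "t' = max s1 (T - r/2)"
      have "t' < T" using Ts1 r t'_def by auto
      moreover have "s1 \<le> t'" using t'_def by simp
      moreover have "z' t' > 0" using r(2)[of t'] \<open>t' < T\<close> t'_def Ts1 r(1) by auto
      ultimately show False using below by fastforce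
    qed
    have nonpos: "z' x \<le> 0" if "s \<le> x" "x \<le> T" for x
      using le_s[of x] below[of x] zT that by (cases "x \<le> s1"; cases "x = T") auto
    have "E s \<le> E T" using Emono[of T] nonpos Ts1 s1_def d by auto
    then have GT: "G (z T) \<le> G H" using EsG zT unfolding E_def by simp
    have "z T \<le> z s1" using zmono[of s1 T] nonpos Ts1 s1_def d by auto
    then have zTH: "z T < H" using zdec H_def by simp
    have "G (z T) - G H \<ge> (H\<^sup>2 - (z T)\<^sup>2) * (c * H powr (p-1)/(p+1) - \<sigma>/2)"
      unfolding G_def by (rule G_ineq) (use nn zTH c p in auto)
    moreover have "H\<^sup>2 - (z T)\<^sup>2 > 0" using zTH nn[of T]
      by (simp add: power_strict_mono)
    moreover have "(H\<^sup>2 - (z T)\<^sup>2) * (c * H powr (p-1)/(p+1) - \<sigma>/2) > 0"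
      using \<open>H\<^sup>2 - (z T)\<^sup>2 > 0\<close> kappa by (rule mult_pos_pos)
    ultimately have "G (z T) - G H > 0" by linarith
    then show False using GT by simp
  qed
  define D where "D = (H\<^sup>2 - (z s1)\<^sup>2) * (c * H powr (p-1)/(p+1) - \<sigma>/2)"
  have Dpos: "D > 0" unfolding D_def using kappa zdec nn[of s1] H_def
    by (intro mult_pos_pos) (auto simp: power_strict_mono)
  define v where "v = sqrt (2*D)"
  have vpos: "v > 0" using Dpos v_def by simp
  have nonpos2: "z' x \<le> 0" if "s \<le> x" for x
    using le_s[of x] claimA[rule_format, of x] that by (cases "x \<le> s1") auto
  have zv: "z' t \<le> - v" if "s1 \<le> t" for t
  proof -
    have "E s \<le> E t" using Emono[of t] nonpos2 that s1_def d by auto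
    then have GT: "(z' t)\<^sup>2/2 \<ge> G (z t) - G H" using EsG unfolding E_def by simp
    have zt: "z t \<le> z s1" using zmono[of s1 t] nonpos2 that s1_def d by auto
    have zts: "z t < H" using zt zdec H_def by simp
    have "G (z t) - G H \<ge> (H\<^sup>2 - (z t)\<^sup>2) * (c * H powr (p-1)/(p+1) - \<sigma>/2)"
      unfolding G_def by (rule G_ineq) (use nn zts c p in auto)
    moreover have "(z t)\<^sup>2 \<le> (z s1)\<^sup>2" using zt nn[of t] by (simp add: power_mono)
    moreover have "(H\<^sup>2 - (z t)\<^sup>2) * (c * H powr (p-1)/(p+1) - \<sigma>/2) \<ge> D"
      unfolding D_def using kappa \<open>(z t)\<^sup>2 \<le> (z s1)\<^sup>2\<close> by (intro mult_right_mono) auto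
    ultimately have "G (z t) - G H \<ge> D" by linarith
    then have "(z' t)\<^sup>2 \<ge> v\<^sup>2" using GT Dpos v_def by simp
    then have "\<bar>z' t\<bar> \<ge> v" using vpos by (metis abs_of_pos abs_le_square_iff)
    then show ?thesis using claimA that by auto
  qed
  define t1 where "t1 = s1 + (z s1 + 1)/v"
  have "s1 \<le> t1" using vpos nn[of s1] t1_def by simp
  have "z t1 + v * t1 \<le> z s1 + v * s1"
    using \<open>s1 \<le> t1\<close>
  proof (rule DERIV_nonpos_imp_nonincreasing)
    fix x assume "s1 \<le> x" "x \<le> t1"
    show "\<exists>y. DERIV (\<lambda>t. z t + v * t) x :> y \<and> y \<le> 0"
      using zv[OF \<open>s1 \<le> x\<close>] by (auto intro!: exI derivative_eq_intros d1)
  qed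
  moreover have "v * t1 = v * s1 + z s1 + 1" using vpos unfolding t1_def by (simp add: field_simps)
  ultimately have "z t1 \<le> -1" by linarith
  then show False using nn[of t1] by simp
qed

lemma powr_threshold:
  fixes p X y :: real
  assumes p: "p > 1" and X: "X \<ge> 0" and y: "y \<ge> X powr (1/(p-1))"
  shows "y powr (p-1) \<ge> X"
proof -
  have "(X powr (1/(p-1))) powr (p-1) \<le> y powr (p-1)"
    using y p by (intro powr_mono2) auto
  moreover have "(X powr (1/(p-1))) powr (p-1) = X"
    using p X by (simp add: powr_powr)
  ultimately show ?thesis by simp
qed

lemma z_bounded:
  fixes z z' z'' :: "real \<Rightarrow> real" and b \<sigma> c p :: real
  assumes b: "b > 0" and \<sigma>: "\<sigma> > 0" and c: "c > 0" and p: "p > 1"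
    and nn: "\<And>t. z t \<ge> 0"
    and d1: "\<And>t. DERIV z t :> z' t"
    and d2: "\<And>t. DERIV z' t :> z'' t"
    and ineq: "\<And>t. z'' t \<le> b * z' t + \<sigma> * z t - c * z t powr p"
  shows "\<exists>K. \<forall>t\<ge>0. z t \<le> K"
proof -
  define H0 where "H0 = (\<sigma>*(p+1)/c) powr (1/(p-1))"
  have crit: "z s < H0" if "z' s = 0" for s
  proof (rule ccontr)
    assume "\<not> z s < H0"
    then have "z s powr (p-1) \<ge> \<sigma>*(p+1)/c"
      unfolding H0_def by (intro powr_threshold) (use p \<sigma> c in auto)
    then have "c * z s powr (p-1) \<ge> \<sigma>*(p+1)" using c by (simp add: field_simps)
    then show False using falling[OF b \<sigma> c p nn d1 d2 ineq that] by blast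
  qed
  define K where "K = max (z 0) H0"
  have contz: "continuous_on UNIV z" using d1 by (intro DERIV_continuous_on) auto
  show ?thesis
  proof (cases "\<forall>t\<ge>0. z t \<le> K")
    case True then show ?thesis by blast
  next
    case False
    then obtain t2 where t2: "t2 \<ge> 0" "z t2 > K" by (auto simp: not_le)
    have monog: "z t' \<le> z t" if "a \<ge> 0" "z a > K" "a \<le> t'" "t' \<le> t" for a t t'
    proof -
      have "continuous_on {0..t} z" using contz by (rule continuous_on_subset) auto
      from continuous_attains_sup[OF compact_Icc _ this] that obtain s where
        s: "s \<in> {0..t}" "\<And>y. y \<in> {0..t} \<Longrightarrow> z y \<le> z s" by fastforce
      have zs: "z s \<ge> z a" using s that by auto
      have "s \<noteq> 0" using zs that K_def by auto
      have "s = t"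
      proof (rule ccontr)
        assume "s \<noteq> t"
        then have st: "0 < s" "s < t" using s \<open>s \<noteq> 0\<close> by auto
        have "z' s = 0"
        proof (rule DERIV_local_max[OF d1])
          show "0 < min s (t - s)" using st by simp
          show "\<forall>y. \<bar>s - y\<bar> < min s (t - s) \<longrightarrow> z y \<le> z s"
            using s(2) by (auto simp: abs_if split: if_splits)
        qed
        then have "z s < H0" by (rule crit)
        then show False using zs that K_def by auto
      qed
      then show ?thesis using s that by auto
    qed
    have mono: "z t' \<le> z t" if "t2 \<le> t'" "t' \<le> t" for t t'
      using monog[of t2 t' t] t2 that by simp
    have zpos': "z' t \<ge> 0" if "t \<ge> t2" for t
    proof (rule ccontr)
      assume "\<not> z' t \<ge> 0"
      then have "z' t < 0" by simp
      from DERIV_neg_dec_right[OF d1 this] obtain d where "d > 0" "\<And>h. h > 0 \<Longrightarrow> h < d \<Longrightarrow> z t > z (t + h)"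
        by blast
      then have "z t > z (t + d/2)" by simp
      moreover have "z t \<le> z (t + d/2)" using mono[of t "t + d/2"] that \<open>d > 0\<close> by simp
      ultimately show False by simp
    qed
    define A where "A = 2 * b"
    define Z1 where "Z1 = max (z t2) (((\<sigma> + 2*b\<^sup>2)/c) powr (1/(p-1))) + 1"
    have gZ: "\<sigma> * y - c * y powr p \<le> - (b * A) * y" if "y \<ge> Z1" for y
    proof -
      have y0: "y > 0" using that Z1_def nn[of t2] by simp
      have "y powr (p-1) \<ge> (\<sigma> + 2*b\<^sup>2)/c"
        by (rule powr_threshold) (use p \<sigma> b c that Z1_def in auto)
      then have "c * y powr (p-1) \<ge> \<sigma> + 2*b\<^sup>2" using c by (simp add: field_simps)
      then have "y * (c * y powr (p-1)) \<ge> y * (\<sigma> + 2*b\<^sup>2)" using y0 by (simp add: mult_left_mono)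
      moreover have "y powr p = y * y powr (p-1)"
        using powr_mult_base[of y "p-1"] y0 by simp
      ultimately show ?thesis unfolding A_def by (simp add: algebra_simps power2_eq_square)
    qed
    have bounded: "\<exists>M. \<forall>t\<ge>t2. z t \<le> M"
    proof (rule ccontr)
      assume "\<not> ?thesis"
      then obtain t3 where t3: "t3 \<ge> t2" "z t3 > Z1" by (meson not_le)
      have Zt: "z t \<ge> Z1" if "t \<ge> t3" for t using mono[of t3 t] that t3 by simp
      show False
      proof (cases "\<exists>t4\<ge>t3. z' t4 < A * z t4")
        case True
        then obtain t4 where t4: "t4 \<ge> t3" "z' t4 < A * z t4" by blast
        define Phi where "Phi t = exp (- b * t) * (z' t - A * z t4)" for t
        have dPhi: "DERIV Phi t :> exp (- b * t) * (z'' t - b * z' t + b * A * z t4)" for t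
          unfolding Phi_def
          by (rule derivative_eq_intros d2 refl | simp add: algebra_simps)+
        have Phidec: "Phi t \<le> Phi t4" if "t \<ge> t4" for t
          using that
        proof (rule DERIV_nonpos_imp_nonincreasing)
          fix x assume x: "t4 \<le> x" "x \<le> t"
          have "z x \<ge> z t4" using mono[of t4 x] x t4 t3 by simp
          have "z x \<ge> Z1" using Zt x t4 by simp
          then have "\<sigma> * z x - c * z x powr p \<le> - (b * A) * z x" by (rule gZ)
          moreover have "b * A * z t4 \<le> b * A * z x" using \<open>z x \<ge> z t4\<close> b A_def by simp
          ultimately have "z'' x - b * z' x + b * A * z t4 \<le> 0" using ineq[of x] by simp
          then show "\<exists>y. DERIV Phi x :> y \<and> y \<le> 0"
            using dPhi[of x] by (intro exI[of _ "exp (- b * x) * (z'' x - b * z' x + b * A * z t4)"])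
              (simp add: mult_nonneg_nonpos)
        qed
        have P4: "Phi t4 < 0" unfolding Phi_def using t4 by (simp add: mult_pos_neg)
        define X where "X = (A * z t4 + 1) / (- Phi t4)"
        have "A * z t4 \<ge> 0" using A_def b nn[of t4] by simp
        then have X0: "X > 0" unfolding X_def using P4 by (intro divide_pos_pos) auto
        define t where "t = max t4 (ln X / b)"
        have "exp (b * t) \<ge> X"
        proof -
          have "t \<ge> ln X / b" using t_def by simp
          then have "b * t \<ge> b * (ln X / b)" using b by (intro mult_left_mono) auto
          then have "b * t \<ge> ln X" using b by simp
          then have "exp (b * t) \<ge> exp (ln X)" by simp
          then show ?thesis using X0 by simp
        qed
        have "Phi t \<le> Phi t4" using Phidec t_def by simp
        then have "exp (-b*t) * (z' t - A * z t4) \<le> Phi t4" unfolding Phi_def by simp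
        then have "z' t - A * z t4 \<le> exp (b * t) * Phi t4"
          by (simp add: exp_minus field_simps)
        moreover have "exp (b * t) * Phi t4 \<le> X * Phi t4"
          using \<open>exp (b * t) \<ge> X\<close> P4 by (simp add: mult_right_mono_neg)
        moreover have "X * Phi t4 = - (A * z t4 + 1)" unfolding X_def using P4 by simp
        ultimately have "z' t < 0" by simp
        moreover have "z' t \<ge> 0" using zpos'[of t] t_def t4 t3 by simp
        ultimately show False by simp
      next
        case False
        then have ge: "z' t \<ge> A * z t" if "t \<ge> t3" for t using that by (simp add: not_less)
        define psi where "psi t = exp (- A * t) * z t" for t
        have psiinc: "psi t3 \<le> psi t" if "t \<ge> t3" for t
          using that
        proof (rule DERIV_nonneg_imp_nondecreasing)
          fix x assume x: "t3 \<le> x" "x \<le> t"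
          have "DERIV psi x :> exp (- A * x) * (z' x - A * z x)"
            unfolding psi_def by (rule derivative_eq_intros d1 refl | simp add: algebra_simps)+
          then show "\<exists>y. DERIV psi x :> y \<and> y \<ge> 0" using ge[of x] x by auto
        qed
        define chi where "chi t = exp (- b * t) * z' t" for t
        have chidec: "chi t \<le> chi t3" if "t \<ge> t3" for t
          using that
        proof (rule DERIV_nonpos_imp_nonincreasing)
          fix x assume x: "t3 \<le> x" "x \<le> t"
          have "DERIV chi x :> exp (- b * x) * (z'' x - b * z' x)"
            unfolding chi_def by (rule derivative_eq_intros d2 refl | simp add: algebra_simps)+
          moreover have "z'' x - b * z' x \<le> 0"
          proof -
            have "z x \<ge> Z1" using Zt x by simp
            then have "\<sigma> * z x - c * z x powr p \<le> - (b * A) * z x" by (rule gZ)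
            moreover have "(b * A) * z x \<ge> 0" using b A_def nn[of x] by simp
            ultimately show ?thesis using ineq[of x] by simp
          qed
          ultimately show "\<exists>y. DERIV chi x :> y \<and> y \<le> 0" by (intro exI conjI) (auto simp: mult_nonneg_nonpos)
        qed
        have z3: "z t3 > 0" using t3 Z1_def nn[of t2] by simp
        define Y where "Y = max 1 (z' t3 / (A * z t3)) + 1"
        define t where "t = t3 + ln Y / b"
        have Y1: "Y > 1" unfolding Y_def by simp
        have tt3: "t \<ge> t3" unfolding t_def using Y1 b by simp
        have eY: "exp (b * (t - t3)) = Y" unfolding t_def using b Y1 by simp
        have "psi t3 \<le> psi t" using psiinc tt3 by simp
        then have zlow: "z t \<ge> exp (A * (t - t3)) * z t3"
          unfolding psi_def by (simp add: exp_minus field_simps exp_diff)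
        have "chi t \<le> chi t3" using chidec tt3 by simp
        then have zup: "z' t \<le> exp (b * (t - t3)) * z' t3"
          unfolding chi_def by (simp add: exp_minus field_simps exp_diff)
        have "exp (A * (t - t3)) = Y * Y" unfolding A_def using eY
          by (metis exp_add mult_2 distrib_right)
        then have "A * (Y * Y * z t3) \<le> z' t" using ge[OF tt3] zlow A_def b
          by (smt (verit) mult_left_mono)
        then have "A * (Y * Y * z t3) \<le> Y * z' t3" using zup eY by simp
        then have "Y * (A * z t3) \<le> z' t3" using Y1 by (simp add: algebra_simps)
        moreover have "Y > z' t3 / (A * z t3)" unfolding Y_def by simp
        then have "Y * (A * z t3) > z' t3" using z3 b A_def by (simp add: field_simps)
        ultimately show False by simp
      qed
    qed
    then obtain M where M: "\<forall>t\<ge>t2. z t \<le> M" by blast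
    show ?thesis
    proof (intro exI allI impI)
      fix t :: real assume "t \<ge> 0"
      show "z t \<le> max K M"
      proof (cases "t \<ge> t2")
        case True then show ?thesis using M by fastforce
      next
        case False
        show ?thesis
        proof (cases "z t > K")
          case True
          then have "z t2 \<le> M" using M by simp
          moreover have "z t \<le> z t2" using monog[of t t t2] True \<open>t \<ge> 0\<close> False by simp
          ultimately show ?thesis by simp
        qed simp
      qed
    qed
  qed
qed

lemma powr_1plus: "0 \<le> (x::real) \<Longrightarrow> x powr (1 + y) = x * x powr y"
  by (simp add: powr_add)

lemma equil_one:
  fixes a1 a2 \<sigma> \<mu> \<beta> p q s :: real
  assumes \<sigma>: "\<sigma> > 0" and q: "q > 0" and p: "p = 2*q+1" and a1: "a1 > 0" and a2: "a2 \<ge> 0"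
    and G: "\<sigma>*a1 - (\<mu> * a1 powr p + \<beta> * a1 powr q * a2 powr (q+1)) = 0"
    and s: "s = \<sigma> powr (1/(p-1))"
  shows "\<mu> * (a1/s) powr (2*q) + \<beta> * (a1/s) powr (q-1) * (a2/s) powr (q+1) = 1"
proof -
  have s0: "s > 0" using s \<sigma> by simp
  have sp: "s powr (2*q) = \<sigma>" using s p q \<sigma> by (simp add: powr_powr)
  have sp2: "s powr (q-1) * s powr (q+1) = \<sigma>"
    using sp by (simp add: powr_add[symmetric])
  have ap: "a1 powr p = a1 * a1 powr (2*q)" using p a1 powr_1plus[of a1 "2*q"] by (simp add: add.commute)
  have aq: "a1 powr q = a1 * a1 powr (q-1)" using powr_1plus[of a1 "q-1"] a1 by simp
  have "a1 * (\<sigma> - (\<mu> * a1 powr (2*q) + \<beta> * a1 powr (q-1) * a2 powr (q+1))) = 0"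
    using G unfolding ap aq by (simp add: algebra_simps)
  then have eq: "\<mu> * a1 powr (2*q) + \<beta> * a1 powr (q-1) * a2 powr (q+1) = \<sigma>" using a1 by simp
  have "\<mu> * (a1/s) powr (2*q) + \<beta> * (a1/s) powr (q-1) * (a2/s) powr (q+1)
      = (\<mu> * a1 powr (2*q) + \<beta> * a1 powr (q-1) * a2 powr (q+1)) / \<sigma>"
    unfolding powr_divide using sp sp2 \<sigma> s0 by (simp add: field_simps)
  then show ?thesis using eq \<sigma> by simp
qed

lemma equil:
  fixes a1 a2 \<sigma> \<mu>\<^sub>1 \<mu>\<^sub>2 \<beta> p q L :: real
  assumes \<sigma>: "\<sigma> > 0" and q: "q > 0" and p: "p = 2*q+1" and a1: "a1 \<ge> 0" and a2: "a2 \<ge> 0"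
    and G1: "\<sigma>*a1 - (\<mu>\<^sub>1 * a1 powr p + \<beta> * a1 powr q * a2 powr (q+1)) = 0"
    and G2: "\<sigma>*a2 - (\<mu>\<^sub>2 * a2 powr p + \<beta> * a2 powr q * a1 powr (q+1)) = 0"
    and L: "L = - \<sigma>*(a1\<^sup>2+a2\<^sup>2)/2 + 1/(p+1)*(\<mu>\<^sub>1 * a1 powr (p+1) + 2*\<beta> * a1 powr (q+1) * a2 powr (q+1) + \<mu>\<^sub>2 * a2 powr (p+1))"
  shows "L = 0 \<or>
            (\<exists>k l. k \<ge> 0 \<and> l \<ge> 0 \<and> (k \<noteq> 0 \<or> l \<noteq> 0) \<and>
               (k > 0 \<and> l > 0 \<longrightarrow>
                  \<mu>\<^sub>1 * k powr (2 * q) + \<beta> * k powr (q - 1) * l powr (q + 1) = 1 \<and>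
                  \<mu>\<^sub>2 * l powr (2 * q) + \<beta> * l powr (q - 1) * k powr (q + 1) = 1) \<and>
               (k = 0 \<longrightarrow> \<mu>\<^sub>2 * l powr (2 * q) = 1) \<and>
               (l = 0 \<longrightarrow> \<mu>\<^sub>1 * k powr (2 * q) = 1) \<and>
               L = - (p - 1) / (2 * (p + 1)) * (k\<^sup>2 + l\<^sup>2) * \<sigma> powr ((p + 1) / (p - 1)))"
proof -
  have e1: "a1 powr (p+1) = a1 * a1 powr p" using powr_1plus[OF a1, of p] by (simp add: add.commute)
  have e2: "a2 powr (p+1) = a2 * a2 powr p" using powr_1plus[OF a2, of p] by (simp add: add.commute)
  have e3: "a1 powr (q+1) = a1 * a1 powr q" using powr_1plus[OF a1, of q] by (simp add: add.commute)
  have e4: "a2 powr (q+1) = a2 * a2 powr q" using powr_1plus[OF a2, of q] by (simp add: add.commute)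
  have h1: "\<sigma> * a1\<^sup>2 = \<mu>\<^sub>1 * a1 powr (p+1) + \<beta> * a1 powr (q+1) * a2 powr (q+1)"
  proof -
    have "a1 * (\<sigma>*a1 - (\<mu>\<^sub>1 * a1 powr p + \<beta> * a1 powr q * a2 powr (q+1))) = 0" using G1 by simp
    then show ?thesis unfolding e1 e3 by (simp add: algebra_simps power2_eq_square)
  qed
  have h2: "\<sigma> * a2\<^sup>2 = \<mu>\<^sub>2 * a2 powr (p+1) + \<beta> * a1 powr (q+1) * a2 powr (q+1)"
  proof -
    have "a2 * (\<sigma>*a2 - (\<mu>\<^sub>2 * a2 powr p + \<beta> * a2 powr q * a1 powr (q+1))) = 0" using G2 by simp
    then show ?thesis unfolding e2 e4 by (simp add: algebra_simps power2_eq_square)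
  qed
  define S where "S = a1\<^sup>2 + a2\<^sup>2"
  have LS: "L = - (p - 1) / (2 * (p + 1)) * \<sigma> * S"
  proof -
    have "L = - \<sigma>*S/2 + 1/(p+1) * (\<sigma> * S)" unfolding L S_def using h1 h2 by (simp add: algebra_simps)
    then show ?thesis using p q by (simp add: field_simps)
  qed
  show ?thesis
  proof (cases "a1 = 0 \<and> a2 = 0")
    case True then show ?thesis using LS S_def by simp
  next
    case False
    define s where "s = \<sigma> powr (1/(p-1))"
    have s0: "s > 0" using s_def \<sigma> by simp
    define k where "k = a1 / s"
    define l where "l = a2 / s"
    have k0: "k \<ge> 0" "l \<ge> 0" using a1 a2 s0 k_def l_def by auto
    have kl: "k \<noteq> 0 \<or> l \<noteq> 0" using False s0 k_def l_def by auto
    have ek: "a1 > 0 \<Longrightarrow> \<mu>\<^sub>1 * k powr (2 * q) + \<beta> * k powr (q - 1) * l powr (q + 1) = 1"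
      unfolding k_def l_def by (rule equil_one[OF \<sigma> q p _ a2 G1 s_def])
    have el: "a2 > 0 \<Longrightarrow> \<mu>\<^sub>2 * l powr (2 * q) + \<beta> * l powr (q - 1) * k powr (q + 1) = 1"
      unfolding k_def l_def by (rule equil_one[OF \<sigma> q p _ a1 G2 s_def])
    have Lk: "L = - (p - 1) / (2 * (p + 1)) * (k\<^sup>2 + l\<^sup>2) * \<sigma> powr ((p + 1) / (p - 1))"
    proof -
      have "(p + 1) / (p - 1) = 1 + 2/(p-1)"
        using p q by (simp add: field_simps)
      then have "\<sigma> powr ((p + 1) / (p - 1)) = \<sigma> powr (1 + 2/(p-1))" by simp
      also have "\<dots> = \<sigma> * s\<^sup>2" unfolding s_def using \<sigma>
        by (simp add: powr_add powr_powr power2_eq_square powr_add[symmetric])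
      finally have "\<sigma> powr ((p + 1) / (p - 1)) = \<sigma> * s\<^sup>2" .
      moreover have "k\<^sup>2 + l\<^sup>2 = S / s\<^sup>2" unfolding k_def l_def S_def by (simp add: power_divide add_divide_distrib)
      ultimately show ?thesis unfolding LS using s0 by simp
    qed
    show ?thesis
    proof (rule disjI2, intro exI conjI impI)
      show "k \<ge> 0" "l \<ge> 0" "k \<noteq> 0 \<or> l \<noteq> 0" using k0 kl by auto
      show "\<mu>\<^sub>1 * k powr (2 * q) + \<beta> * k powr (q - 1) * l powr (q + 1) = 1" if "k > 0 \<and> l > 0"
        using ek that k_def s0 by (simp add: divide_pos_pos zero_less_divide_iff)
      show "\<mu>\<^sub>2 * l powr (2 * q) + \<beta> * l powr (q - 1) * k powr (q + 1) = 1" if "k > 0 \<and> l > 0"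
        using el that l_def s0 by (simp add: zero_less_divide_iff)
      show "\<mu>\<^sub>2 * l powr (2 * q) = 1" if "k = 0"
        using el that kl k0 l_def s0 a2 by (simp add: zero_less_divide_iff)
      show "\<mu>\<^sub>1 * k powr (2 * q) = 1" if "l = 0"
        using ek that kl k0 k_def s0 a1 by (simp add: zero_less_divide_iff)
      show "L = - (p - 1) / (2 * (p + 1)) * (k\<^sup>2 + l\<^sup>2) * \<sigma> powr ((p + 1) / (p - 1))" by (rule Lk)
    qed
  qed
qed

lemma escape:
  fixes w w' w'' :: "real \<Rightarrow> real"
  assumes b: "b > 0" and d1: "\<And>t. DERIV w t :> w' t" and d2: "\<And>t. DERIV w' t :> w'' t"
    and C: "C \<ge> 0" and ge: "\<And>t. t \<ge> t0 \<Longrightarrow> w'' t \<ge> b * w' t - C" and st: "w' t0 > C/b"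
  shows "\<exists>t\<ge>t0. w t > M"
proof -
  define \<delta> where "\<delta> = w' t0 - C/b"
  have \<delta>: "\<delta> > 0" using st \<delta>_def by simp
  define Phi where "Phi t = exp (- b * t) * (w' t - C/b)" for t
  have dPhi: "DERIV Phi t :> exp (- b * t) * (w'' t - b * w' t + C)" for t
  proof -
    have l: "DERIV (\<lambda>x. - b * x) t :> - b * 1" by (intro DERIV_cmult DERIV_ident)
    have e: "DERIV (\<lambda>t. exp (- b * t)) t :> exp (- b * t) * (- b)"
      using DERIV_fun_exp[OF l] by simp
    have g: "DERIV (\<lambda>t. w' t - C/b) t :> w'' t - 0"
      by (intro DERIV_diff d2 DERIV_const)
    have "DERIV Phi t :> exp (- b * t) * (- b) * (w' t - C/b) + (w'' t - 0) * exp (- b * t)"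
      unfolding Phi_def by (rule DERIV_mult[OF e g])
    moreover have "exp (- b * t) * (- b) * (w' t - C/b) + (w'' t - 0) * exp (- b * t)
        = exp (- b * t) * (w'' t - b * w' t + C)" using b by (simp add: field_simps)
    ultimately show ?thesis by (simp only:)
  qed
  have wd: "w' t \<ge> C/b + \<delta>" if "t \<ge> t0" for t
  proof -
    have "Phi t0 \<le> Phi t" using that
    proof (rule DERIV_nonneg_imp_nondecreasing)
      fix x assume "t0 \<le> x" "x \<le> t"
      then have "w'' x - b * w' x + C \<ge> 0" using ge[of x] by simp
      then have "exp (- b * x) * (w'' x - b * w' x + C) \<ge> 0" by simp
      then show "\<exists>y. DERIV Phi x :> y \<and> y \<ge> 0" using dPhi[of x] by blast
    qed
    then have "exp (- b * t0) * \<delta> \<le> exp (- b * t) * (w' t - C/b)" unfolding Phi_def \<delta>_def by simp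
    then have "exp (b * (t - t0)) * \<delta> \<le> w' t - C/b"
      by (simp add: exp_minus exp_diff field_simps)
    moreover have "exp (b * (t - t0)) \<ge> 1" using b that by simp
    then have "exp (b * (t - t0)) * \<delta> \<ge> \<delta>" using \<delta> by simp
    ultimately show ?thesis by simp
  qed
  have wlin: "w t \<ge> w t0 + \<delta> * (t - t0)" if "t \<ge> t0" for t
  proof -
    have "w t0 - \<delta> * t0 \<le> w t - \<delta> * t" using that
    proof (rule DERIV_nonneg_imp_nondecreasing)
      fix x assume x: "t0 \<le> x" "x \<le> t"
      have "DERIV (\<lambda>t. w t - \<delta> * t) x :> w' x - \<delta>" by (rule derivative_eq_intros d1 refl | simp)+
      moreover have "w' x - \<delta> \<ge> C/b" using wd[of x] x by simp
      moreover have "C/b \<ge> 0" using C b by simp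
      ultimately have "DERIV (\<lambda>t. w t - \<delta> * t) x :> w' x - \<delta> \<and> w' x - \<delta> \<ge> 0" by simp
      then show "\<exists>y. DERIV (\<lambda>t. w t - \<delta> * t) x :> y \<and> y \<ge> 0" by (rule exI)
    qed
    then show ?thesis by (simp add: algebra_simps)
  qed
  define t where "t = t0 + (\<bar>M\<bar> + \<bar>w t0\<bar> + 1) / \<delta>"
  have tt: "t \<ge> t0" unfolding t_def using \<delta> by simp
  have "\<delta> * (t - t0) = \<bar>M\<bar> + \<bar>w t0\<bar> + 1" unfolding t_def using \<delta> by simp
  then have "w t > M" using wlin[OF tt] by linarith
  then show ?thesis using tt by blast
qed

lemma mono_bdd_tendsto:
  fixes f :: "real \<Rightarrow> real"
  assumes mono: "\<And>x y. a \<le> x \<Longrightarrow> x \<le> y \<Longrightarrow> f x \<le> f y" and bdd: "\<And>x. a \<le> x \<Longrightarrow> f x \<le> M"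
  shows "(f \<longlongrightarrow> (SUP x\<in>{a..}. f x)) at_top"
proof (rule order_tendstoI)
  have bd: "bdd_above (f ` {a..})" using bdd by (intro bdd_aboveI[of _ M]) auto
  fix y assume "y < (SUP x\<in>{a..}. f x)"
  then obtain x where x: "x \<in> {a..}" "y < f x" using less_cSUP_iff[OF _ bd] by auto
  show "\<forall>\<^sub>F t in at_top. y < f t"
    unfolding eventually_at_top_linorder
  proof (intro exI[of _ x] allI impI)
    fix t assume "x \<le> t"
    then have "f x \<le> f t" using mono x by simp
    then show "y < f t" using x by simp
  qed
next
  have bd: "bdd_above (f ` {a..})" using bdd by (intro bdd_aboveI[of _ M]) auto
  fix y assume y: "(SUP x\<in>{a..}. f x) < y"
  show "\<forall>\<^sub>F t in at_top. f t < y"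
    unfolding eventually_at_top_linorder
  proof (intro exI[of _ a] allI impI)
    fix t assume "a \<le> t"
    then have "f t \<le> (SUP x\<in>{a..}. f x)" by (intro cSUP_upper[OF _ bd]) auto
    then show "f t < y" using y by simp
  qed
qed

lemma drift:
  fixes f f' :: "real \<Rightarrow> real" and \<tau> \<xi> :: "nat \<Rightarrow> real"
  assumes d: "\<And>t. DERIV f t :> f' t" and f0: "(f' \<longlongrightarrow> 0) at_top"
    and \<tau>: "filterlim \<tau> at_top sequentially" and \<xi>: "\<And>n. \<tau> n \<le> \<xi> n" "\<And>n. \<xi> n \<le> \<tau> n + 1"
  shows "(\<lambda>n. f (\<xi> n) - f (\<tau> n)) \<longlonglongrightarrow> 0"
proof (rule LIMSEQ_I)
  fix r :: real assume r: "r > 0"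
  have "\<forall>\<^sub>F t in at_top. \<bar>f' t\<bar> < r/2"
    using tendstoD[OF f0, of "r/2"] r by (simp add: dist_real_def)
  then obtain T where T: "\<And>t. t \<ge> T \<Longrightarrow> \<bar>f' t\<bar> < r/2" unfolding eventually_at_top_linorder by blast
  have "\<forall>\<^sub>F n in sequentially. \<tau> n \<ge> T" using \<tau> by (simp add: filterlim_at_top)
  then obtain N where N: "\<And>n. n \<ge> N \<Longrightarrow> \<tau> n \<ge> T" unfolding eventually_sequentially by blast
  show "\<exists>no. \<forall>n\<ge>no. norm (f (\<xi> n) - f (\<tau> n) - 0) < r"
  proof (intro exI allI impI)
    fix n assume n: "n \<ge> N"
    show "norm (f (\<xi> n) - f (\<tau> n) - 0) < r"
    proof (cases "\<tau> n = \<xi> n")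
      case True then show ?thesis using r by simp
    next
      case False
      then have lt: "\<tau> n < \<xi> n" using \<xi>(1)[of n] by simp
      from MVT2[of "\<tau> n" "\<xi> n" f f'] lt d obtain \<eta> where
        \<eta>: "\<tau> n < \<eta>" "\<eta> < \<xi> n" "f (\<xi> n) - f (\<tau> n) = (\<xi> n - \<tau> n) * f' \<eta>" by blast
      have "\<bar>f' \<eta>\<bar> < r/2" using T[of \<eta>] N[OF n] \<eta> by simp
      moreover have "\<bar>\<xi> n - \<tau> n\<bar> \<le> 1" using \<xi>[of n] lt by simp
      ultimately have "\<bar>(\<xi> n - \<tau> n) * f' \<eta>\<bar> \<le> 1 * (r/2)"
        unfolding abs_mult by (intro mult_mono) auto
      then show ?thesis using \<eta> r by simp
    qed
  qed
qed

lemma vel_zero: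
  fixes Psi D v a :: "real \<Rightarrow> real"
  assumes b: "b > 0" and B2: "B2 > 0"
    and dPsi: "\<And>t. DERIV Psi t :> D t" and Dge: "\<And>t. t \<ge> 0 \<Longrightarrow> D t \<ge> b * (v t)\<^sup>2"
    and lim: "(Psi \<longlongrightarrow> L) at_top"
    and dv: "\<And>t. DERIV v t :> a t" and ab: "\<And>t. t \<ge> 0 \<Longrightarrow> \<bar>a t\<bar> \<le> B2"
  shows "(v \<longlongrightarrow> 0) at_top"
proof (rule tendstoI)
  fix \<epsilon> :: real assume \<epsilon>: "\<epsilon> > 0"
  define \<delta> where "\<delta> = \<epsilon> / (2 * B2)"
  have \<delta>: "\<delta> > 0" using \<epsilon> B2 \<delta>_def by simp
  have lim2: "((\<lambda>t. Psi (t + \<delta>)) \<longlongrightarrow> L) at_top"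
  proof -
    have "filterlim (\<lambda>t. t + \<delta>) at_top at_top"
      using filterlim_tendsto_add_at_top[OF tendsto_const[of \<delta>] filterlim_ident] by (simp add: add.commute)
    then show ?thesis using lim by (rule filterlim_compose[rotated])
  qed
  have "((\<lambda>t. Psi (t + \<delta>) - Psi t) \<longlongrightarrow> L - L) at_top" using lim2 lim by (rule tendsto_diff)
  then have l0: "((\<lambda>t. Psi (t + \<delta>) - Psi t) \<longlongrightarrow> 0) at_top" by simp
  have pos: "\<delta> * b * \<epsilon>\<^sup>2 / 4 > 0" using \<delta> b \<epsilon> by simp
  have "\<forall>\<^sub>F t in at_top. dist (Psi (t + \<delta>) - Psi t) 0 < \<delta> * b * \<epsilon>\<^sup>2 / 4"
    by (rule tendstoD[OF l0 pos])
  then have "\<forall>\<^sub>F t in at_top. \<bar>Psi (t + \<delta>) - Psi t\<bar> < \<delta> * b * \<epsilon>\<^sup>2 / 4"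
    by (simp add: dist_real_def)
  moreover have "\<forall>\<^sub>F t in at_top. t \<ge> (0::real)" by (rule eventually_ge_at_top)
  ultimately show "\<forall>\<^sub>F t in at_top. dist (v t) 0 < \<epsilon>"
  proof eventually_elim
    case (elim t)
    show ?case
    proof (rule ccontr)
      assume "\<not> dist (v t) 0 < \<epsilon>"
      then have vt: "\<bar>v t\<bar> \<ge> \<epsilon>" by (simp add: dist_real_def)
      have "t < t + \<delta>" using \<delta> by simp
      from MVT2[of t "t + \<delta>" Psi D, OF this] dPsi obtain \<xi> where
        \<xi>: "t < \<xi>" "\<xi> < t + \<delta>" "Psi (t + \<delta>) - Psi t = (t + \<delta> - t) * D \<xi>" by blast
      from MVT2[of t \<xi> v a, OF \<open>t < \<xi>\<close>] dv obtain \<eta> where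
        \<eta>: "t < \<eta>" "\<eta> < \<xi>" "v \<xi> - v t = (\<xi> - t) * a \<eta>" by blast
      have "\<bar>v \<xi> - v t\<bar> \<le> \<delta> * B2"
      proof -
        have "\<bar>(\<xi> - t) * a \<eta>\<bar> = (\<xi> - t) * \<bar>a \<eta>\<bar>" using \<xi> by (simp add: abs_mult)
        also have "\<dots> \<le> \<delta> * B2" using \<xi> ab[of \<eta>] \<eta> elim by (intro mult_mono) auto
        finally show ?thesis using \<eta> by simp
      qed
      moreover have "\<delta> * B2 = \<epsilon>/2" using \<delta>_def B2 by simp
      ultimately have "\<bar>v \<xi> - v t\<bar> \<le> \<epsilon>/2" by simp
      then have "\<bar>v \<xi>\<bar> \<ge> \<epsilon>/2" using vt by arith
      then have "(v \<xi>)\<^sup>2 \<ge> (\<epsilon>/2)\<^sup>2" using \<epsilon> by (metis abs_le_square_iff abs_of_pos half_gt_zero)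
      then have "b * (v \<xi>)\<^sup>2 \<ge> b * (\<epsilon>/2)\<^sup>2" using b by simp
      then have "D \<xi> \<ge> b * \<epsilon>\<^sup>2 / 4" using Dge[of \<xi>] \<xi> elim by (simp add: power_divide)
      then have "\<delta> * D \<xi> \<ge> \<delta> * (b * \<epsilon>\<^sup>2 / 4)" using \<delta> by (simp add: mult_left_mono)
      then have "Psi (t + \<delta>) - Psi t \<ge> \<delta> * b * \<epsilon>\<^sup>2 / 4" using \<xi> by simp
      then show False using elim by arith
    qed
  qed
qed

lemma tendsto_powr_nn:
  fixes f :: "nat \<Rightarrow> real"
  assumes "f \<longlonglongrightarrow> a" "\<And>n. f n \<ge> 0" "e > 0"
  shows "(\<lambda>n. f n powr e) \<longlonglongrightarrow> a powr e"
  using assms by (intro tendsto_powr2) auto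

lemma Psi_deriv:
  fixes w1 w2 w1' w2' w1'' w2'' :: "real \<Rightarrow> real" and b \<sigma> \<mu>\<^sub>1 \<mu>\<^sub>2 \<beta> p q :: real
  assumes q: "q > 0" and p: "p = 2*q+1"
   and nn1: "\<And>t. w1 t \<ge> 0" and nn2: "\<And>t. w2 t \<ge> 0"
   and d1: "\<And>t. DERIV w1 t :> w1' t" and d2: "\<And>t. DERIV w2 t :> w2' t"
   and dd1: "\<And>t. DERIV w1' t :> w1'' t" and dd2: "\<And>t. DERIV w2' t :> w2'' t"
   and o1: "\<And>t. w1'' t = b * w1' t + \<sigma> * w1 t - (\<mu>\<^sub>1 * w1 t powr p + \<beta> * w1 t powr q * w2 t powr (q+1))"
   and o2: "\<And>t. w2'' t = b * w2' t + \<sigma> * w2 t - (\<mu>\<^sub>2 * w2 t powr p + \<beta> * w2 t powr q * w1 t powr (q+1))"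
  shows "DERIV (\<lambda>t. 1/2 * ((w1' t)\<^sup>2 + (w2' t)\<^sup>2 - \<sigma> * ((w1 t)\<^sup>2 + (w2 t)\<^sup>2)) + 1/(p+1) * (\<mu>\<^sub>1 * w1 t powr (p+1) + 2*\<beta> * w1 t powr (q+1) * w2 t powr (q+1) + \<mu>\<^sub>2 * w2 t powr (p+1))) t
     :> b * ((w1' t)\<^sup>2 + (w2' t)\<^sup>2)"
proof -
  have hp: "p+1 > 1" using p q by simp
  have hq: "q+1 > 1" using q by simp
  have P1: "DERIV (\<lambda>t. w1 t powr (p+1)) t :> (p+1) * w1 t powr p * w1' t"
    using DERIV_powr_nonneg[OF hp nn1 d1] by simp
  have P2: "DERIV (\<lambda>t. w2 t powr (p+1)) t :> (p+1) * w2 t powr p * w2' t"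
    using DERIV_powr_nonneg[OF hp nn2 d2] by simp
  have Q1: "DERIV (\<lambda>t. w1 t powr (q+1)) t :> (q+1) * w1 t powr q * w1' t"
    using DERIV_powr_nonneg[OF hq nn1 d1] by simp
  have Q2: "DERIV (\<lambda>t. w2 t powr (q+1)) t :> (q+1) * w2 t powr q * w2' t"
    using DERIV_powr_nonneg[OF hq nn2 d2] by simp
  have S1: "DERIV (\<lambda>x. (w1' x)\<^sup>2) t :> 2 * w1' t * w1'' t"
    using DERIV_power[OF dd1[of t], of 2] by (simp add: mult.commute mult.left_commute)
  have S2: "DERIV (\<lambda>x. (w2' x)\<^sup>2) t :> 2 * w2' t * w2'' t"
    using DERIV_power[OF dd2[of t], of 2] by (simp add: mult.commute mult.left_commute)
  have S3: "DERIV (\<lambda>x. (w1 x)\<^sup>2) t :> 2 * w1 t * w1' t"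
    using DERIV_power[OF d1[of t], of 2] by (simp add: mult.commute mult.left_commute)
  have S4: "DERIV (\<lambda>x. (w2 x)\<^sup>2) t :> 2 * w2 t * w2' t"
    using DERIV_power[OF d2[of t], of 2] by (simp add: mult.commute mult.left_commute)
  have PQ: "DERIV (\<lambda>x. w1 x powr (q+1) * w2 x powr (q+1)) t :>
      (q+1) * w1 t powr q * w1' t * w2 t powr (q+1) + (q+1) * w2 t powr q * w2' t * w1 t powr (q+1)"
    by (rule DERIV_mult[OF Q1 Q2])
  have "DERIV (\<lambda>t. 1/2 * ((w1' t)\<^sup>2 + (w2' t)\<^sup>2 - \<sigma> * ((w1 t)\<^sup>2 + (w2 t)\<^sup>2)) + 1/(p+1) * (\<mu>\<^sub>1 * w1 t powr (p+1) + 2*\<beta> * (w1 t powr (q+1) * w2 t powr (q+1)) + \<mu>\<^sub>2 * w2 t powr (p+1))) t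
     :> 1/2 * ((2 * w1' t * w1'' t) + (2 * w2' t * w2'' t) - \<sigma> * ((2 * w1 t * w1' t) + (2 * w2 t * w2' t)))
        + 1/(p+1) * (\<mu>\<^sub>1 * ((p+1) * w1 t powr p * w1' t) + 2*\<beta> * ((q+1) * w1 t powr q * w1' t * w2 t powr (q+1) + (q+1) * w2 t powr q * w2' t * w1 t powr (q+1)) + \<mu>\<^sub>2 * ((p+1) * w2 t powr p * w2' t))"
    by (intro DERIV_add DERIV_diff DERIV_cmult S1 S2 S3 S4 P1 P2 PQ)
  moreover have "1/2 * ((2 * w1' t * w1'' t) + (2 * w2' t * w2'' t) - \<sigma> * ((2 * w1 t * w1' t) + (2 * w2 t * w2' t)))
        + 1/(p+1) * (\<mu>\<^sub>1 * ((p+1) * w1 t powr p * w1' t) + 2*\<beta> * ((q+1) * w1 t powr q * w1' t * w2 t powr (q+1) + (q+1) * w2 t powr q * w2' t * w1 t powr (q+1)) + \<mu>\<^sub>2 * ((p+1) * w2 t powr p * w2' t))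
     = b * ((w1' t)\<^sup>2 + (w2' t)\<^sup>2)"
  proof -
    have pq: "p + 1 = 2 * (q+1)" using p by simp
    have "2*\<beta> * ((q+1) * w1 t powr q * w1' t * w2 t powr (q+1) + (q+1) * w2 t powr q * w2' t * w1 t powr (q+1)) / (p+1)
        = \<beta> * (w1 t powr q * w1' t * w2 t powr (q+1) + w2 t powr q * w2' t * w1 t powr (q+1))"
      unfolding pq using q by (simp add: field_simps)
    moreover have "\<mu>\<^sub>1 * ((p+1) * w1 t powr p * w1' t) / (p+1) = \<mu>\<^sub>1 * w1 t powr p * w1' t"
      using p q by simp
    moreover have "\<mu>\<^sub>2 * ((p+1) * w2 t powr p * w2' t) / (p+1) = \<mu>\<^sub>2 * w2 t powr p * w2' t"
      using p q by simp
    ultimately show ?thesis unfolding o1 o2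
      by (simp add: algebra_simps power2_eq_square add_divide_distrib)
  qed
  ultimately show ?thesis by (simp add: mult.assoc)
qed

lemma sum_powr_lower:
  fixes x y m p :: real
  assumes "x \<ge> 0" "y \<ge> 0" "p > 0" "m > 0" "\<mu>\<^sub>1 \<ge> m" "\<mu>\<^sub>2 \<ge> m"
  shows "\<mu>\<^sub>1 * x powr p + \<mu>\<^sub>2 * y powr p \<ge> m / 2 powr p * (x + y) powr p"
proof -
  have "((x + y)/2) powr p \<le> (max x y) powr p" using assms by (intro powr_mono2) auto
  moreover have "(max x y) powr p \<le> x powr p + y powr p" by (cases "x \<le> y") (auto simp: max_def)
  ultimately have "(x + y) powr p / 2 powr p \<le> x powr p + y powr p" by (simp add: powr_divide)
  then have "m * ((x + y) powr p / 2 powr p) \<le> m * (x powr p + y powr p)" using assms by (intro mult_left_mono) auto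
  also have "\<dots> \<le> \<mu>\<^sub>1 * x powr p + \<mu>\<^sub>2 * y powr p" using assms
    by (simp add: distrib_left add_mono mult_right_mono)
  finally show ?thesis by (metis times_divide_eq_left times_divide_eq_right)
qed

lemma ode_main:
  fixes w1 w2 w1' w2' w1'' w2'' :: "real \<Rightarrow> real" and b \<sigma> \<mu>\<^sub>1 \<mu>\<^sub>2 \<beta> p q :: real
  assumes b: "b > 0" and \<sigma>: "\<sigma> > 0" and \<mu>1: "\<mu>\<^sub>1 > 0" and \<mu>2: "\<mu>\<^sub>2 > 0" and \<beta>: "\<beta> > 0"
   and q: "q > 0" and p: "p = 2*q+1"
   and nn1: "\<And>t. w1 t \<ge> 0" and nn2: "\<And>t. w2 t \<ge> 0"
   and d1: "\<And>t. DERIV w1 t :> w1' t" and d2: "\<And>t. DERIV w2 t :> w2' t"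
   and dd1: "\<And>t. DERIV w1' t :> w1'' t" and dd2: "\<And>t. DERIV w2' t :> w2'' t"
   and o1: "\<And>t. w1'' t = b * w1' t + \<sigma> * w1 t - (\<mu>\<^sub>1 * w1 t powr p + \<beta> * w1 t powr q * w2 t powr (q+1))"
   and o2: "\<And>t. w2'' t = b * w2' t + \<sigma> * w2 t - (\<mu>\<^sub>2 * w2 t powr p + \<beta> * w2 t powr q * w1 t powr (q+1))"
  shows "\<exists>L. ((\<lambda>t. 1/2 * ((w1' t)\<^sup>2 + (w2' t)\<^sup>2 - \<sigma> * ((w1 t)\<^sup>2 + (w2 t)\<^sup>2)) + 1/(p+1) * (\<mu>\<^sub>1 * w1 t powr (p+1) + 2*\<beta> * w1 t powr (q+1) * w2 t powr (q+1) + \<mu>\<^sub>2 * w2 t powr (p+1))) \<longlongrightarrow> L) at_top \<and>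
           (L = 0 \<or>
            (\<exists>k l. k \<ge> 0 \<and> l \<ge> 0 \<and> (k \<noteq> 0 \<or> l \<noteq> 0) \<and>
               (k > 0 \<and> l > 0 \<longrightarrow>
                  \<mu>\<^sub>1 * k powr (2 * q) + \<beta> * k powr (q - 1) * l powr (q + 1) = 1 \<and>
                  \<mu>\<^sub>2 * l powr (2 * q) + \<beta> * l powr (q - 1) * k powr (q + 1) = 1) \<and>
               (k = 0 \<longrightarrow> \<mu>\<^sub>2 * l powr (2 * q) = 1) \<and>
               (l = 0 \<longrightarrow> \<mu>\<^sub>1 * k powr (2 * q) = 1) \<and>
               L = - (p - 1) / (2 * (p + 1)) * (k\<^sup>2 + l\<^sup>2) * \<sigma> powr ((p + 1) / (p - 1))))"
proof -
  have p1: "p > 1" using p q by simp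
  define f1 where "f1 t = \<mu>\<^sub>1 * w1 t powr p + \<beta> * w1 t powr q * w2 t powr (q+1)" for t
  define f2 where "f2 t = \<mu>\<^sub>2 * w2 t powr p + \<beta> * w2 t powr q * w1 t powr (q+1)" for t
  define c where "c = min \<mu>\<^sub>1 \<mu>\<^sub>2 / 2 powr p"
  have c: "c > 0" using \<mu>1 \<mu>2 c_def by simp
  have zineq: "w1'' t + w2'' t \<le> b * (w1' t + w2' t) + \<sigma> * (w1 t + w2 t) - c * (w1 t + w2 t) powr p" for t
  proof -
    have "\<mu>\<^sub>1 * w1 t powr p + \<mu>\<^sub>2 * w2 t powr p \<ge> c * (w1 t + w2 t) powr p"
      unfolding c_def by (rule sum_powr_lower) (use nn1 nn2 p1 \<mu>1 \<mu>2 in auto)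
    moreover have "\<beta> * w1 t powr q * w2 t powr (q+1) \<ge> 0" "\<beta> * w2 t powr q * w1 t powr (q+1) \<ge> 0"
      using \<beta> by auto
    ultimately show ?thesis unfolding o1 o2 by (simp add: algebra_simps)
  qed
  have "\<exists>K. \<forall>t\<ge>0. w1 t + w2 t \<le> K"
  proof (rule z_bounded[where z="\<lambda>t. w1 t + w2 t" and z'="\<lambda>t. w1' t + w2' t" and z''="\<lambda>t. w1'' t + w2'' t", OF b \<sigma> c p1])
    show "\<And>t. 0 \<le> w1 t + w2 t" using nn1 nn2 by (simp add: add_nonneg_nonneg)
    show "\<And>t. DERIV (\<lambda>t. w1 t + w2 t) t :> w1' t + w2' t" using d1 d2 by (rule DERIV_add)
    show "\<And>t. DERIV (\<lambda>t. w1' t + w2' t) t :> w1'' t + w2'' t" using dd1 dd2 by (rule DERIV_add)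
    show "\<And>t. w1'' t + w2'' t \<le> b * (w1' t + w2' t) + \<sigma> * (w1 t + w2 t) - c * (w1 t + w2 t) powr p"
      by (rule zineq)
  qed
  then obtain K where K: "\<And>t. t \<ge> 0 \<Longrightarrow> w1 t + w2 t \<le> K" by blast
  have K0: "K \<ge> 0" using K[of 0] nn1[of 0] nn2[of 0] by simp
  have w1K: "w1 t \<le> K" and w2K: "w2 t \<le> K" if "t \<ge> 0" for t
    using K[OF that] nn1[of t] nn2[of t] by auto
  define C1 where "C1 = \<mu>\<^sub>1 * K powr p + \<beta> * K powr q * K powr (q+1)"
  define C2 where "C2 = \<mu>\<^sub>2 * K powr p + \<beta> * K powr q * K powr (q+1)"
  have C10: "C1 \<ge> 0" and C20: "C2 \<ge> 0" using \<mu>1 \<mu>2 \<beta> C1_def C2_def by auto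
  have f1b: "0 \<le> f1 t \<and> f1 t \<le> C1" if "t \<ge> 0" for t
  proof -
    have "w1 t powr p \<le> K powr p" using w1K[OF that] nn1[of t] p1 by (intro powr_mono2) auto
    moreover have "w1 t powr q \<le> K powr q" using w1K[OF that] nn1[of t] q by (intro powr_mono2) auto
    moreover have "w2 t powr (q+1) \<le> K powr (q+1)" using w2K[OF that] nn2[of t] q by (intro powr_mono2) auto
    ultimately have "w1 t powr q * w2 t powr (q+1) \<le> K powr q * K powr (q+1)"
      by (intro mult_mono) auto
    then have m2: "\<beta> * w1 t powr q * w2 t powr (q+1) \<le> \<beta> * K powr q * K powr (q+1)"
      using \<beta> by (simp add: mult.assoc)
    have m1: "\<mu>\<^sub>1 * w1 t powr p \<le> \<mu>\<^sub>1 * K powr p" using \<open>w1 t powr p \<le> K powr p\<close> \<mu>1 by simp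
    have "0 \<le> \<mu>\<^sub>1 * w1 t powr p" "0 \<le> \<beta> * w1 t powr q * w2 t powr (q+1)" using \<mu>1 \<beta> by simp_all
    then show ?thesis unfolding f1_def C1_def using m1 m2 by linarith
  qed
  have f2b: "0 \<le> f2 t \<and> f2 t \<le> C2" if "t \<ge> 0" for t
  proof -
    have "w2 t powr p \<le> K powr p" using w2K[OF that] nn2[of t] p1 by (intro powr_mono2) auto
    moreover have "w2 t powr q \<le> K powr q" using w2K[OF that] nn2[of t] q by (intro powr_mono2) auto
    moreover have "w1 t powr (q+1) \<le> K powr (q+1)" using w1K[OF that] nn1[of t] q by (intro powr_mono2) auto
    ultimately have "w2 t powr q * w1 t powr (q+1) \<le> K powr q * K powr (q+1)"
      by (intro mult_mono) auto
    then have m2: "\<beta> * w2 t powr q * w1 t powr (q+1) \<le> \<beta> * K powr q * K powr (q+1)"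
      using \<beta> by (simp add: mult.assoc)
    have m1: "\<mu>\<^sub>2 * w2 t powr p \<le> \<mu>\<^sub>2 * K powr p" using \<open>w2 t powr p \<le> K powr p\<close> \<mu>2 by simp
    have "0 \<le> \<mu>\<^sub>2 * w2 t powr p" "0 \<le> \<beta> * w2 t powr q * w1 t powr (q+1)" using \<mu>2 \<beta> by simp_all
    then show ?thesis unfolding f2_def C2_def using m1 m2 by linarith
  qed
  have o1': "w1'' t = b * w1' t + \<sigma> * w1 t - f1 t" for t using o1 f1_def by simp
  have o2': "w2'' t = b * w2' t + \<sigma> * w2 t - f2 t" for t using o2 f2_def by simp
  have vb: "- (\<sigma>*K)/b \<le> w' t \<and> w' t \<le> C/b"
    if nnw: "\<And>t. w t \<ge> 0" and wK: "\<And>t. t \<ge> 0 \<Longrightarrow> w t \<le> K"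
      and dw: "\<And>t. DERIV w t :> w' t" and ddw: "\<And>t. DERIV w' t :> w'' t"
      and lo: "\<And>t. t \<ge> 0 \<Longrightarrow> w'' t \<ge> b * w' t - C" and hi: "\<And>t. t \<ge> 0 \<Longrightarrow> w'' t \<le> b * w' t + \<sigma> * K"
      and C: "C \<ge> 0" and t: "t \<ge> 0"
    for w w' w'' :: "real \<Rightarrow> real" and C t
  proof
    show "w' t \<le> C/b"
    proof (rule ccontr)
      assume "\<not> w' t \<le> C/b"
      then have "w' t > C/b" by simp
      from escape[OF b dw ddw C _ this, of K] lo t obtain t' where "t' \<ge> t" "w t' > K" by auto
      then show False using wK[of t'] t by simp
    qed
    show "- (\<sigma>*K)/b \<le> w' t"
    proof (rule ccontr)
      assume "\<not> - (\<sigma>*K)/b \<le> w' t"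
      then have "- w' t > (\<sigma>*K)/b" by simp
      have dm: "\<And>t. DERIV (\<lambda>t. - w t) t :> - w' t" using dw by (intro DERIV_minus)
      have ddm: "\<And>t. DERIV (\<lambda>t. - w' t) t :> - w'' t" using ddw by (intro DERIV_minus)
      have lo2: "- w'' s \<ge> b * (- w' s) - \<sigma> * K" if "s \<ge> t" for s
      proof -
        have "w'' s \<le> b * w' s + \<sigma> * K" using hi[of s] t that by simp
        then show ?thesis by simp
      qed
      have "\<sigma> * K \<ge> 0" using \<sigma> K0 by simp
      from escape[OF b dm ddm this lo2 \<open>- w' t > (\<sigma>*K)/b\<close>, of 0] obtain t' where "t' \<ge> t" "- w t' > 0"
        by auto
      then show False using nnw[of t'] by simp
    qed
  qed
  have v1: "- (\<sigma>*K)/b \<le> w1' t \<and> w1' t \<le> C1/b" if "t \<ge> 0" for t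
  proof (rule vb[OF nn1 w1K d1 dd1 _ _ C10 that])
    fix s :: real assume s: "s \<ge> 0"
    have "\<sigma> * w1 s \<ge> 0" "\<sigma> * w1 s \<le> \<sigma>*K" using \<sigma> nn1[of s] w1K[OF s] by (simp_all add: mult_left_mono)
    then show "w1'' s \<ge> b * w1' s - C1" "w1'' s \<le> b * w1' s + \<sigma> * K" using o1'[of s] f1b[OF s] by linarith+
  qed
  have v2: "- (\<sigma>*K)/b \<le> w2' t \<and> w2' t \<le> C2/b" if "t \<ge> 0" for t
  proof (rule vb[OF nn2 w2K d2 dd2 _ _ C20 that])
    fix s :: real assume s: "s \<ge> 0"
    have "\<sigma> * w2 s \<ge> 0" "\<sigma> * w2 s \<le> \<sigma>*K" using \<sigma> nn2[of s] w2K[OF s] by (simp_all add: mult_left_mono)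
    then show "w2'' s \<ge> b * w2' s - C2" "w2'' s \<le> b * w2' s + \<sigma> * K" using o2'[of s] f2b[OF s] by linarith+
  qed
  define B where "B = (\<sigma>*K)/b + C1/b + C2/b"
  have B1: "\<bar>w1' t\<bar> \<le> B" and B2: "\<bar>w2' t\<bar> \<le> B" if "t \<ge> 0" for t
  proof -
    have "C1/b \<ge> 0" "C2/b \<ge> 0" "\<sigma>*K/b \<ge> 0" using C10 C20 \<sigma> K0 b by simp_all
    then show "\<bar>w1' t\<bar> \<le> B" "\<bar>w2' t\<bar> \<le> B" using v1[OF that] v2[OF that] unfolding B_def abs_le_iff by linarith+
  qed
  have B0: "B \<ge> 0" using C10 C20 \<sigma> K0 b B_def by simp
  define BB where "BB = b * B + \<sigma> * K + C1 + C2 + 1"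
  have "b * B \<ge> 0" "\<sigma> * K \<ge> 0" using B0 b \<sigma> K0 by simp_all
  then have BB0: "BB > 0" using C10 C20 BB_def by linarith
  have a1b: "\<bar>w1'' t\<bar> \<le> BB" and a2b: "\<bar>w2'' t\<bar> \<le> BB" if "t \<ge> 0" for t
  proof -
    have "\<bar>b * w1' t\<bar> \<le> b * B" "\<bar>b * w2' t\<bar> \<le> b * B"
      using B1[OF that] B2[OF that] b by (simp_all add: abs_mult)
    moreover have "0 \<le> \<sigma> * w1 t" "\<sigma> * w1 t \<le> \<sigma> * K" "0 \<le> \<sigma> * w2 t" "\<sigma> * w2 t \<le> \<sigma> * K"
      using \<sigma> nn1[of t] nn2[of t] w1K[OF that] w2K[OF that] by (simp_all add: mult_left_mono)
    ultimately show "\<bar>w1'' t\<bar> \<le> BB" "\<bar>w2'' t\<bar> \<le> BB"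
      using o1'[of t] o2'[of t] f1b[OF that] f2b[OF that] C10 C20 unfolding BB_def abs_le_iff by linarith+
  qed
  define Psi where "Psi t = 1/2 * ((w1' t)\<^sup>2 + (w2' t)\<^sup>2 - \<sigma> * ((w1 t)\<^sup>2 + (w2 t)\<^sup>2)) + 1/(p+1) * (\<mu>\<^sub>1 * w1 t powr (p+1) + 2*\<beta> * w1 t powr (q+1) * w2 t powr (q+1) + \<mu>\<^sub>2 * w2 t powr (p+1))" for t
  have dPsi: "DERIV Psi t :> b * ((w1' t)\<^sup>2 + (w2' t)\<^sup>2)" for t
    unfolding Psi_def by (rule Psi_deriv[OF q p nn1 nn2 d1 d2 dd1 dd2 o1 o2])
  have Psimono: "Psi x \<le> Psi y" if "x \<le> y" for x y
    using that
  proof (rule DERIV_nonneg_imp_nondecreasing)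
    fix z assume "x \<le> z" "z \<le> y"
    have "b * ((w1' z)\<^sup>2 + (w2' z)\<^sup>2) \<ge> 0" using b by simp
    then show "\<exists>y. DERIV Psi z :> y \<and> y \<ge> 0" using dPsi[of z] by blast
  qed
  define MM where "MM = B\<^sup>2 + 1/(p+1) * (\<mu>\<^sub>1 * K powr (p+1) + 2*\<beta> * K powr (q+1) * K powr (q+1) + \<mu>\<^sub>2 * K powr (p+1))"
  have Psibd: "Psi t \<le> MM" if "t \<ge> 0" for t
  proof -
    have s1: "(w1' t)\<^sup>2 \<le> B\<^sup>2" using B1[OF that] by (metis abs_le_square_iff abs_of_nonneg B0)
    have s2: "(w2' t)\<^sup>2 \<le> B\<^sup>2" using B2[OF that] by (metis abs_le_square_iff abs_of_nonneg B0)
    have s3: "\<sigma> * ((w1 t)\<^sup>2 + (w2 t)\<^sup>2) \<ge> 0" using \<sigma> by simp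
    have m1: "w1 t powr (p+1) \<le> K powr (p+1)" using w1K[OF that] nn1[of t] p1 by (intro powr_mono2) auto
    have m2: "w2 t powr (p+1) \<le> K powr (p+1)" using w2K[OF that] nn2[of t] p1 by (intro powr_mono2) auto
    have m3: "w1 t powr (q+1) \<le> K powr (q+1)" using w1K[OF that] nn1[of t] q by (intro powr_mono2) auto
    have m4: "w2 t powr (q+1) \<le> K powr (q+1)" using w2K[OF that] nn2[of t] q by (intro powr_mono2) auto
    have "w1 t powr (q+1) * w2 t powr (q+1) \<le> K powr (q+1) * K powr (q+1)"
      using m3 m4 by (intro mult_mono) auto
    then have m5: "2*\<beta> * w1 t powr (q+1) * w2 t powr (q+1) \<le> 2*\<beta> * K powr (q+1) * K powr (q+1)"
      using \<beta> by (simp add: mult.assoc)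
    have "\<mu>\<^sub>1 * w1 t powr (p+1) \<le> \<mu>\<^sub>1 * K powr (p+1)" "\<mu>\<^sub>2 * w2 t powr (p+1) \<le> \<mu>\<^sub>2 * K powr (p+1)"
      using m1 m2 \<mu>1 \<mu>2 by simp_all
    then have F: "\<mu>\<^sub>1 * w1 t powr (p+1) + 2*\<beta> * w1 t powr (q+1) * w2 t powr (q+1) + \<mu>\<^sub>2 * w2 t powr (p+1)
      \<le> \<mu>\<^sub>1 * K powr (p+1) + 2*\<beta> * K powr (q+1) * K powr (q+1) + \<mu>\<^sub>2 * K powr (p+1)" using m5 by linarith
    have "1/(p+1) * (\<mu>\<^sub>1 * w1 t powr (p+1) + 2*\<beta> * w1 t powr (q+1) * w2 t powr (q+1) + \<mu>\<^sub>2 * w2 t powr (p+1))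
      \<le> 1/(p+1) * (\<mu>\<^sub>1 * K powr (p+1) + 2*\<beta> * K powr (q+1) * K powr (q+1) + \<mu>\<^sub>2 * K powr (p+1))"
      using F p1 by (intro mult_left_mono) auto
    moreover have "1/2 * ((w1' t)\<^sup>2 + (w2' t)\<^sup>2 - \<sigma>*((w1 t)\<^sup>2+(w2 t)\<^sup>2)) \<le> B\<^sup>2"
    proof -
      have "(w1' t)\<^sup>2 + (w2' t)\<^sup>2 - \<sigma>*((w1 t)\<^sup>2+(w2 t)\<^sup>2) \<le> 2 * B\<^sup>2" using s1 s2 s3 by linarith
      then show ?thesis by simp
    qed
    ultimately show ?thesis unfolding Psi_def MM_def by linarith
  qed
  define L where "L = (SUP x\<in>{0..}. Psi x)"
  have Psilim: "(Psi \<longlongrightarrow> L) at_top" unfolding L_def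
    by (rule mono_bdd_tendsto[of 0 Psi MM]) (use Psimono Psibd in auto)
  have w1'0: "(w1' \<longlongrightarrow> 0) at_top"
    by (rule vel_zero[OF b BB0 dPsi _ Psilim dd1 a1b]) (use b in \<open>auto simp: mult_left_mono\<close>)
  have w2'0: "(w2' \<longlongrightarrow> 0) at_top"
    by (rule vel_zero[OF b BB0 dPsi _ Psilim dd2 a2b]) (use b in \<open>auto simp: mult_left_mono\<close>)
  \<comment> \<open>Step 5: omega-limit point\<close>
  define S where "S = {0..K} \<times> {0..K}"
  have "compact S" unfolding S_def by (intro compact_Times compact_Icc)
  then have sc: "seq_compact S" by (rule compact_imp_seq_compact)
  have mem: "\<forall>n. (\<lambda>n. (w1 (real n), w2 (real n))) n \<in> S"
  proof
    fix n :: nat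
    have "real n \<ge> 0" by simp
    then show "(\<lambda>n. (w1 (real n), w2 (real n))) n \<in> S"
      unfolding S_def using nn1[of "real n"] nn2[of "real n"] w1K[of "real n"] w2K[of "real n"] by simp
  qed
  obtain a r where ar: "a \<in> S" "strict_mono r" "((\<lambda>n. (w1 (real n), w2 (real n))) \<circ> r) \<longlonglongrightarrow> a"
    by (rule seq_compactE[OF sc mem])
  obtain a1 a2 where a: "a = (a1, a2)" by (cases a)
  have a0: "a1 \<ge> 0" "a2 \<ge> 0" using ar(1) a S_def by auto
  define \<tau> where "\<tau> n = real (r n)" for n
  have \<tau>lim: "filterlim \<tau> at_top sequentially"
    unfolding \<tau>_def by (rule filterlim_compose[OF filterlim_real_sequentially filterlim_subseq[OF ar(2)]])
  have pl: "(\<lambda>n. (w1 (\<tau> n), w2 (\<tau> n))) \<longlonglongrightarrow> (a1, a2)" using ar(3) a unfolding \<tau>_def o_def by simp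
  have hw1: "(\<lambda>n. w1 (\<tau> n)) \<longlonglongrightarrow> a1" using tendsto_fst[OF pl] by simp
  have hw2: "(\<lambda>n. w2 (\<tau> n)) \<longlonglongrightarrow> a2" using tendsto_snd[OF pl] by simp
  have \<tau>1lim: "filterlim (\<lambda>n. \<tau> n + 1) at_top sequentially"
    using filterlim_tendsto_add_at_top[OF tendsto_const[of 1] \<tau>lim] by (simp add: add.commute)
  have lim0: "(\<lambda>n. v (\<sigma>' n)) \<longlonglongrightarrow> 0" if "(v \<longlongrightarrow> 0) at_top" "filterlim \<sigma>' at_top sequentially"
    for v :: "real \<Rightarrow> real" and \<sigma>' :: "nat \<Rightarrow> real"
    using filterlim_compose[OF that] .
  have cp: "\<exists>\<xi>1 \<xi>2. (\<forall>n. \<tau> n < \<xi>1 n \<and> \<xi>1 n < \<tau> n + 1 \<and> w1' (\<tau> n + 1) - w1' (\<tau> n) = w1'' (\<xi>1 n)) \<and>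
                   (\<forall>n. \<tau> n < \<xi>2 n \<and> \<xi>2 n < \<tau> n + 1 \<and> w2' (\<tau> n + 1) - w2' (\<tau> n) = w2'' (\<xi>2 n))"
  proof -
    have "\<forall>n. \<exists>\<xi>. \<tau> n < \<xi> \<and> \<xi> < \<tau> n + 1 \<and> w1' (\<tau> n + 1) - w1' (\<tau> n) = w1'' \<xi>"
    proof
      fix n
      from MVT2[of "\<tau> n" "\<tau> n + 1" w1' w1''] dd1 show "\<exists>\<xi>. \<tau> n < \<xi> \<and> \<xi> < \<tau> n + 1 \<and> w1' (\<tau> n + 1) - w1' (\<tau> n) = w1'' \<xi>"
        by auto
    qed
    moreover have "\<forall>n. \<exists>\<xi>. \<tau> n < \<xi> \<and> \<xi> < \<tau> n + 1 \<and> w2' (\<tau> n + 1) - w2' (\<tau> n) = w2'' \<xi>"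
    proof
      fix n
      from MVT2[of "\<tau> n" "\<tau> n + 1" w2' w2''] dd2 show "\<exists>\<xi>. \<tau> n < \<xi> \<and> \<xi> < \<tau> n + 1 \<and> w2' (\<tau> n + 1) - w2' (\<tau> n) = w2'' \<xi>"
        by auto
    qed
    ultimately show ?thesis by (metis choice)
  qed
  then obtain \<xi>1 \<xi>2 where
    \<xi>1: "\<And>n. \<tau> n < \<xi>1 n" "\<And>n. \<xi>1 n < \<tau> n + 1" "\<And>n. w1' (\<tau> n + 1) - w1' (\<tau> n) = w1'' (\<xi>1 n)" and
    \<xi>2: "\<And>n. \<tau> n < \<xi>2 n" "\<And>n. \<xi>2 n < \<tau> n + 1" "\<And>n. w2' (\<tau> n + 1) - w2' (\<tau> n) = w2'' (\<xi>2 n)"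
    by blast
  have \<xi>1lim: "filterlim \<xi>1 at_top sequentially"
  proof (rule filterlim_at_top_mono[OF \<tau>lim])
    have "\<forall>n. \<tau> n \<le> \<xi>1 n" using \<xi>1(1) less_imp_le by blast
    then show "\<forall>\<^sub>F n in sequentially. \<tau> n \<le> \<xi>1 n" by (rule always_eventually)
  qed
  have \<xi>2lim: "filterlim \<xi>2 at_top sequentially"
  proof (rule filterlim_at_top_mono[OF \<tau>lim])
    have "\<forall>n. \<tau> n \<le> \<xi>2 n" using \<xi>2(1) less_imp_le by blast
    then show "\<forall>\<^sub>F n in sequentially. \<tau> n \<le> \<xi>2 n" by (rule always_eventually)
  qed
  have conv: "(\<lambda>n. w1 (\<xi> n)) \<longlonglongrightarrow> a1 \<and> (\<lambda>n. w2 (\<xi> n)) \<longlonglongrightarrow> a2"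
    if "\<And>n. \<tau> n < \<xi> n" "\<And>n. \<xi> n < \<tau> n + 1" for \<xi> :: "nat \<Rightarrow> real"
  proof -
    have "(\<lambda>n. w1 (\<xi> n) - w1 (\<tau> n)) \<longlonglongrightarrow> 0"
      by (rule drift[OF d1 w1'0 \<tau>lim]) (use that in \<open>auto intro: less_imp_le\<close>)
    from tendsto_add[OF this hw1] have A: "(\<lambda>n. w1 (\<xi> n)) \<longlonglongrightarrow> a1" by simp
    have "(\<lambda>n. w2 (\<xi> n) - w2 (\<tau> n)) \<longlonglongrightarrow> 0"
      by (rule drift[OF d2 w2'0 \<tau>lim]) (use that in \<open>auto intro: less_imp_le\<close>)
    from tendsto_add[OF this hw2] have B: "(\<lambda>n. w2 (\<xi> n)) \<longlonglongrightarrow> a2" by simp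
    show ?thesis using A B by simp
  qed
  have pq: "p > 0" "q + 1 > 0" using p1 q by simp_all
  have G1: "\<sigma>*a1 - (\<mu>\<^sub>1 * a1 powr p + \<beta> * a1 powr q * a2 powr (q+1)) = 0"
  proof -
    have "(\<lambda>n. w1'' (\<xi>1 n)) = (\<lambda>n. w1' (\<tau> n + 1) - w1' (\<tau> n))" using \<xi>1(3) by simp
    moreover have "(\<lambda>n. w1' (\<tau> n + 1) - w1' (\<tau> n)) \<longlonglongrightarrow> 0 - 0"
      by (intro tendsto_diff lim0[OF w1'0 \<tau>1lim] lim0[OF w1'0 \<tau>lim])
    ultimately have L0: "(\<lambda>n. w1'' (\<xi>1 n)) \<longlonglongrightarrow> 0" by simp
    obtain A B where AB: "(\<lambda>n. w1 (\<xi>1 n)) \<longlonglongrightarrow> a1" "(\<lambda>n. w2 (\<xi>1 n)) \<longlonglongrightarrow> a2" using conv[OF \<xi>1(1,2)] by blast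
    have "(\<lambda>n. w1'' (\<xi>1 n)) \<longlonglongrightarrow> b * 0 + \<sigma> * a1 - (\<mu>\<^sub>1 * a1 powr p + \<beta> * a1 powr q * a2 powr (q+1))"
      unfolding o1
    proof -
      have t1: "(\<lambda>n. w1 (\<xi>1 n) powr p) \<longlonglongrightarrow> a1 powr p" by (rule tendsto_powr_nn[OF AB(1) nn1 pq(1)])
      have t2: "(\<lambda>n. w1 (\<xi>1 n) powr q) \<longlonglongrightarrow> a1 powr q" by (rule tendsto_powr_nn[OF AB(1) nn1 q])
      have t3: "(\<lambda>n. w2 (\<xi>1 n) powr (q+1)) \<longlonglongrightarrow> a2 powr (q+1)" by (rule tendsto_powr_nn[OF AB(2) nn2 pq(2)])
      show "(\<lambda>n. b * w1' (\<xi>1 n) + \<sigma> * w1 (\<xi>1 n) - (\<mu>\<^sub>1 * w1 (\<xi>1 n) powr p + \<beta> * w1 (\<xi>1 n) powr q * w2 (\<xi>1 n) powr (q + 1)))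
          \<longlonglongrightarrow> b * 0 + \<sigma> * a1 - (\<mu>\<^sub>1 * a1 powr p + \<beta> * a1 powr q * a2 powr (q + 1))"
        by (intro tendsto_diff tendsto_add tendsto_mult tendsto_const lim0[OF w1'0 \<xi>1lim] AB t1 t2 t3)
    qed
    from LIMSEQ_unique[OF L0 this] show ?thesis by simp
  qed
  have G2: "\<sigma>*a2 - (\<mu>\<^sub>2 * a2 powr p + \<beta> * a2 powr q * a1 powr (q+1)) = 0"
  proof -
    have "(\<lambda>n. w2'' (\<xi>2 n)) = (\<lambda>n. w2' (\<tau> n + 1) - w2' (\<tau> n))" using \<xi>2(3) by simp
    moreover have "(\<lambda>n. w2' (\<tau> n + 1) - w2' (\<tau> n)) \<longlonglongrightarrow> 0 - 0"
      by (intro tendsto_diff lim0[OF w2'0 \<tau>1lim] lim0[OF w2'0 \<tau>lim])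
    ultimately have L0: "(\<lambda>n. w2'' (\<xi>2 n)) \<longlonglongrightarrow> 0" by simp
    obtain A B where AB: "(\<lambda>n. w1 (\<xi>2 n)) \<longlonglongrightarrow> a1" "(\<lambda>n. w2 (\<xi>2 n)) \<longlonglongrightarrow> a2" using conv[OF \<xi>2(1,2)] by blast
    have "(\<lambda>n. w2'' (\<xi>2 n)) \<longlonglongrightarrow> b * 0 + \<sigma> * a2 - (\<mu>\<^sub>2 * a2 powr p + \<beta> * a2 powr q * a1 powr (q+1))"
      unfolding o2
    proof -
      have t1: "(\<lambda>n. w2 (\<xi>2 n) powr p) \<longlonglongrightarrow> a2 powr p" by (rule tendsto_powr_nn[OF AB(2) nn2 pq(1)])
      have t2: "(\<lambda>n. w2 (\<xi>2 n) powr q) \<longlonglongrightarrow> a2 powr q" by (rule tendsto_powr_nn[OF AB(2) nn2 q])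
      have t3: "(\<lambda>n. w1 (\<xi>2 n) powr (q+1)) \<longlonglongrightarrow> a1 powr (q+1)" by (rule tendsto_powr_nn[OF AB(1) nn1 pq(2)])
      show "(\<lambda>n. b * w2' (\<xi>2 n) + \<sigma> * w2 (\<xi>2 n) - (\<mu>\<^sub>2 * w2 (\<xi>2 n) powr p + \<beta> * w2 (\<xi>2 n) powr q * w1 (\<xi>2 n) powr (q + 1)))
          \<longlonglongrightarrow> b * 0 + \<sigma> * a2 - (\<mu>\<^sub>2 * a2 powr p + \<beta> * a2 powr q * a1 powr (q + 1))"
        by (intro tendsto_diff tendsto_add tendsto_mult tendsto_const lim0[OF w2'0 \<xi>2lim] AB t1 t2 t3)
    qed
    from LIMSEQ_unique[OF L0 this] show ?thesis by simp
  qed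
  have LL: "L = - \<sigma>*(a1\<^sup>2+a2\<^sup>2)/2 + 1/(p+1)*(\<mu>\<^sub>1 * a1 powr (p+1) + 2*\<beta> * a1 powr (q+1) * a2 powr (q+1) + \<mu>\<^sub>2 * a2 powr (p+1))"
  proof -
    have l1: "(\<lambda>n. Psi (\<tau> n)) \<longlonglongrightarrow> L" using filterlim_compose[OF Psilim \<tau>lim] .
    have "(\<lambda>n. Psi (\<tau> n)) \<longlonglongrightarrow> 1/2 * (0\<^sup>2 + 0\<^sup>2 - \<sigma> * (a1\<^sup>2 + a2\<^sup>2)) + 1/(p+1) * (\<mu>\<^sub>1 * a1 powr (p+1) + 2*\<beta> * a1 powr (q+1) * a2 powr (q+1) + \<mu>\<^sub>2 * a2 powr (p+1))"
    proof -
      have t1: "(\<lambda>n. w1 (\<tau> n) powr (p+1)) \<longlonglongrightarrow> a1 powr (p+1)" by (rule tendsto_powr_nn[OF hw1 nn1]) (use pq in simp)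
      have t2: "(\<lambda>n. w2 (\<tau> n) powr (p+1)) \<longlonglongrightarrow> a2 powr (p+1)" by (rule tendsto_powr_nn[OF hw2 nn2]) (use pq in simp)
      have t3: "(\<lambda>n. w1 (\<tau> n) powr (q+1)) \<longlonglongrightarrow> a1 powr (q+1)" by (rule tendsto_powr_nn[OF hw1 nn1 pq(2)])
      have t4: "(\<lambda>n. w2 (\<tau> n) powr (q+1)) \<longlonglongrightarrow> a2 powr (q+1)" by (rule tendsto_powr_nn[OF hw2 nn2 pq(2)])
      show ?thesis unfolding Psi_def
        by (intro tendsto_diff tendsto_add tendsto_mult tendsto_const tendsto_power lim0[OF w1'0 \<tau>lim] lim0[OF w2'0 \<tau>lim] hw1 hw2 t1 t2 t3 t4)
    qed
    from LIMSEQ_unique[OF l1 this] show ?thesis by simp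
  qed
  have "(\<lambda>t. 1/2 * ((w1' t)\<^sup>2 + (w2' t)\<^sup>2 - \<sigma> * ((w1 t)\<^sup>2 + (w2 t)\<^sup>2)) + 1/(p+1) * (\<mu>\<^sub>1 * w1 t powr (p+1) + 2*\<beta> * w1 t powr (q+1) * w2 t powr (q+1) + \<mu>\<^sub>2 * w2 t powr (p+1))) = Psi"
    unfolding Psi_def by (rule ext) simp
  then show ?thesis using Psilim equil[OF \<sigma> q p a0 G1 G2 LL] by (intro exI[of _ L]) simp
qed

lemma norm_line:
  fixes x :: "real^'n"
  shows "norm (x + t *\<^sub>R axis i 1) = sqrt ((norm x)\<^sup>2 + 2*t*(x$i) + t\<^sup>2)"
proof -
  have e: "(x + t *\<^sub>R axis i 1) \<bullet> (x + t *\<^sub>R axis i 1) = x \<bullet> x + 2*t*(x \<bullet> axis i 1) + t\<^sup>2 * (axis i 1 \<bullet> (axis i (1::real)))"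
    by (simp add: inner_add_left inner_add_right inner_commute algebra_simps power2_eq_square)
  have "x \<bullet> axis i 1 = x $ i" by (simp add: inner_axis)
  moreover have "axis i 1 \<bullet> (axis i (1::real)) = 1" by (simp add: inner_axis_axis)
  moreover have "x \<bullet> x = (norm x)\<^sup>2" by (simp add: power2_norm_eq_inner)
  ultimately have "(x + t *\<^sub>R axis i 1) \<bullet> (x + t *\<^sub>R axis i 1) = (norm x)\<^sup>2 + 2*t*(x$i) + t\<^sup>2"
    using e by simp
  then show ?thesis by (simp add: norm_eq_sqrt_inner)
qed

lemma DERIV_norm_line:
  fixes x :: "real^'n"
  assumes "x \<noteq> 0"
  shows "DERIV (\<lambda>t. norm (x + t *\<^sub>R axis i 1)) 0 :> x$i / norm x"
proof -
  have pos: "0 < (norm x)\<^sup>2 + 2*0*(x$i) + 0\<^sup>2" using assms by simp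
  have inner: "DERIV (\<lambda>t. (norm x)\<^sup>2 + 2*t*(x$i) + t\<^sup>2) 0 :> 2 * x$i"
    by (rule derivative_eq_intros refl | simp)+
  have "DERIV (\<lambda>t. sqrt ((norm x)\<^sup>2 + 2*t*(x$i) + t\<^sup>2)) 0 :> inverse (sqrt ((norm x)\<^sup>2 + 2*0*(x$i) + 0\<^sup>2)) / 2 * (2 * x$i)"
    by (rule DERIV_chain2[OF DERIV_real_sqrt[OF pos] inner])
  then show ?thesis unfolding norm_line using assms by (simp add: field_simps)
qed

lemma line_nonzero:
  fixes x :: "real^'n"
  assumes "x \<noteq> 0" "t \<in> ball 0 (norm x)"
  shows "x + t *\<^sub>R axis i 1 \<noteq> 0"
proof
  assume "x + t *\<^sub>R axis i 1 = 0"
  then have "x = - (t *\<^sub>R axis i 1)" by (simp add: eq_neg_iff_add_eq_0)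
  then have "norm x = \<bar>t\<bar>" by simp
  then show False using assms(2) by simp
qed

lemma partial_radial_DERIV:
  fixes u :: "real^'n \<Rightarrow> real" and U Ud :: "real \<Rightarrow> real"
  assumes rad: "\<And>y. y \<noteq> 0 \<Longrightarrow> u y = U (norm y)"
    and dU: "DERIV U (norm x) :> Ud (norm x)" and x: "x \<noteq> 0"
  shows "DERIV (\<lambda>t. u (x + t *\<^sub>R axis i 1)) 0 :> Ud (norm x) * (x$i / norm x)"
proof -
  have dU': "DERIV U (norm (x + 0 *\<^sub>R axis i 1)) :> Ud (norm x)" using dU by simp
  have D: "DERIV (\<lambda>t. U (norm (x + t *\<^sub>R axis i 1))) 0 :> Ud (norm x) * (x$i / norm x)"
    by (rule DERIV_chain2[OF dU' DERIV_norm_line[OF x]])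
  show ?thesis
  proof (rule has_field_derivative_transform_within_open[OF D, of "ball 0 (norm x)"])
    show "open (ball (0::real) (norm x))" by simp
    show "(0::real) \<in> ball 0 (norm x)" using x by simp
    fix t :: real assume "t \<in> ball 0 (norm x)"
    then show "U (norm (x + t *\<^sub>R axis i 1)) = u (x + t *\<^sub>R axis i 1)"
      using rad[OF line_nonzero[OF x, of t i]] by simp
  qed
qed

lemma partial_radial:
  fixes u :: "real^'n \<Rightarrow> real" and U Ud :: "real \<Rightarrow> real"
  assumes rad: "\<And>y. y \<noteq> 0 \<Longrightarrow> u y = U (norm y)"
    and dU: "DERIV U (norm x) :> Ud (norm x)" and x: "x \<noteq> 0"
  shows "partial i u x = Ud (norm x) * (x$i / norm x)"
  unfolding partial_def by (rule DERIV_imp_deriv[OF partial_radial_DERIV[where Ud=Ud and x=x, OF rad dU x]])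

lemma pp_radial:
  fixes u :: "real^'n \<Rightarrow> real" and U Ud Udd :: "real \<Rightarrow> real"
  assumes rad: "\<And>y. y \<noteq> 0 \<Longrightarrow> u y = U (norm y)"
    and dU: "\<And>r. r > 0 \<Longrightarrow> DERIV U r :> Ud r"
    and dU1: "DERIV Ud (norm x) :> Udd (norm x)" and x: "x \<noteq> 0"
  shows "partial i (partial i u) x = Udd (norm x) * (x$i / norm x)\<^sup>2 + Ud (norm x) * (1 / norm x - (x$i)\<^sup>2 / (norm x)^3)"
proof -
  define N where "N t = norm (x + t *\<^sub>R axis i 1)" for t
  have N0: "N 0 = norm x" unfolding N_def by simp
  have nx: "norm x > 0" using x by simp
  have dN: "DERIV N 0 :> x$i / norm x" unfolding N_def by (rule DERIV_norm_line[OF x])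
  have dU1': "DERIV Ud (N 0) :> Udd (norm x)" using dU1 N0 by simp
  have c1: "DERIV (\<lambda>t. Ud (N t)) 0 :> Udd (norm x) * (x$i / norm x)"
    by (rule DERIV_chain2[OF dU1' dN])
  have lin: "DERIV (\<lambda>t. x$i + t) 0 :> 0 + 1" by (intro DERIV_add DERIV_const DERIV_ident)
  have c2: "DERIV (\<lambda>t. (x$i + t) / N t) 0 :> ((0 + 1) * N 0 - (x$i + 0) * (x$i / norm x)) / (N 0 * N 0)"
    by (rule DERIV_divide[OF lin dN]) (use N0 nx in simp)
  have D: "DERIV (\<lambda>t. Ud (N t) * ((x$i + t) / N t)) 0 :>
      Udd (norm x) * (x$i / norm x) * ((x$i + 0) / N 0) + ((0 + 1) * N 0 - (x$i + 0) * (x$i / norm x)) / (N 0 * N 0) * Ud (N 0)"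
    by (rule DERIV_mult[OF c1 c2])
  have D2: "DERIV (\<lambda>t. partial i u (x + t *\<^sub>R axis i 1)) 0 :>
      Udd (norm x) * (x$i / norm x) * ((x$i + 0) / N 0) + ((0 + 1) * N 0 - (x$i + 0) * (x$i / norm x)) / (N 0 * N 0) * Ud (N 0)"
  proof (rule has_field_derivative_transform_within_open[OF D, of "ball 0 (norm x)"])
    show "open (ball (0::real) (norm x))" by simp
    show "(0::real) \<in> ball 0 (norm x)" using x by simp
    fix t :: real assume t: "t \<in> ball 0 (norm x)"
    have nz: "x + t *\<^sub>R axis i 1 \<noteq> 0" by (rule line_nonzero[OF x t])
    have "DERIV U (norm (x + t *\<^sub>R axis i 1)) :> Ud (norm (x + t *\<^sub>R axis i 1))"
      using dU nz by simp
    from partial_radial[where Ud=Ud and x="x + t *\<^sub>R axis i 1", OF rad this nz, of i]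
    show "Ud (N t) * ((x$i + t) / N t) = partial i u (x + t *\<^sub>R axis i 1)"
      unfolding N_def by simp
  qed
  have "partial i (partial i u) x =
      Udd (norm x) * (x$i / norm x) * ((x$i + 0) / N 0) + ((0 + 1) * N 0 - (x$i + 0) * (x$i / norm x)) / (N 0 * N 0) * Ud (N 0)"
    unfolding partial_def[of i "partial i u"] by (rule DERIV_imp_deriv[OF D2])
  also have "\<dots> = Udd (norm x) * (x$i / norm x)\<^sup>2 + Ud (norm x) * (1 / norm x - (x$i)\<^sup>2 / (norm x)^3)"
    unfolding N0 using nx by (simp add: field_simps power2_eq_square power3_eq_cube)
  finally show ?thesis .
qed

lemma lap_radial:
  fixes u :: "real^'n \<Rightarrow> real" and U Ud Udd :: "real \<Rightarrow> real"
  assumes rad: "\<And>y. y \<noteq> 0 \<Longrightarrow> u y = U (norm y)"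
    and dU: "\<And>r. r > 0 \<Longrightarrow> DERIV U r :> Ud r"
    and dU1: "\<And>r. r > 0 \<Longrightarrow> DERIV Ud r :> Udd r" and x: "x \<noteq> 0"
  shows "laplacian u x = Udd (norm x) + (real CARD('n) - 1) / norm x * Ud (norm x)"
proof -
  have nx: "norm x > 0" using x by simp
  have sq: "(\<Sum>i\<in>UNIV. (x$i)\<^sup>2) = (norm x)\<^sup>2"
  proof -
    have "(norm x)\<^sup>2 = x \<bullet> x" by (rule power2_norm_eq_inner)
    also have "\<dots> = (\<Sum>i\<in>UNIV. (x$i)\<^sup>2)" by (simp add: inner_vec_def power2_eq_square)
    finally show ?thesis by simp
  qed
  have "laplacian u x = (\<Sum>i\<in>UNIV. Udd (norm x) * (x$i / norm x)\<^sup>2 + Ud (norm x) * (1 / norm x - (x$i)\<^sup>2 / (norm x)^3))"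
    unfolding laplacian_def using pp_radial[where Ud=Ud and Udd=Udd and x=x, OF rad dU dU1[OF nx] x] by simp
  also have "\<dots> = Udd (norm x) * (\<Sum>i\<in>UNIV. (x$i)\<^sup>2) / (norm x)\<^sup>2 + Ud (norm x) * (real CARD('n) / norm x - (\<Sum>i\<in>UNIV. (x$i)\<^sup>2) / (norm x)^3)"
    by (simp add: sum.distrib sum_distrib_left sum_subtractf power_divide sum_divide_distrib[symmetric] right_diff_distrib)
  also have "\<dots> = Udd (norm x) + (real CARD('n) - 1) / norm x * Ud (norm x)"
    unfolding sq using nx by (simp add: field_simps power2_eq_square power3_eq_cube)
  finally show ?thesis .
qed

lemma along_axis:
  fixes g :: "real^'n \<Rightarrow> real"
  assumes "partial_exists i g (r *\<^sub>R axis i 1)"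
  shows "DERIV (\<lambda>s. g (s *\<^sub>R axis i 1)) r :> partial i g (r *\<^sub>R axis i 1)"
proof -
  have fe: "(\<lambda>t. g (r *\<^sub>R axis i 1 + t *\<^sub>R axis i 1)) = (\<lambda>t. g ((t + r) *\<^sub>R axis i 1))"
    by (rule ext) (simp add: scaleR_add_left add.commute)
  have "(\<lambda>t. g ((t + r) *\<^sub>R axis i 1)) differentiable (at 0)"
    using assms unfolding partial_exists_def fe .
  then have "DERIV (\<lambda>t. g ((t + r) *\<^sub>R axis i 1)) 0 :> deriv (\<lambda>t. g ((t + r) *\<^sub>R axis i 1)) 0"
    by (simp add: DERIV_deriv_iff_real_differentiable)
  then have "DERIV (\<lambda>s. g (s *\<^sub>R axis i 1)) (0 + r) :> deriv (\<lambda>t. g ((t + r) *\<^sub>R axis i 1)) 0"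
    by (subst DERIV_shift) simp
  then show ?thesis unfolding partial_def fe by simp
qed

definition i0 :: "'n::finite" where "i0 = (SOME i. True)"

lemma unitv_axis: "(unitv :: real^'n::finite) = axis (i0 :: 'n) 1"
  unfolding unitv_def i0_def ..

lemma radial_profile:
  fixes u :: "real^'n \<Rightarrow> real"
  assumes C2: "C2_on (- {0}) u" and rad: "radial u"
  shows "\<And>y. y \<noteq> 0 \<Longrightarrow> u y = u (norm y *\<^sub>R unitv)"
    and "\<And>r. r \<noteq> 0 \<Longrightarrow> DERIV (\<lambda>s. u (s *\<^sub>R unitv)) r :> partial i0 u (r *\<^sub>R unitv)"
    and "\<And>r. r \<noteq> 0 \<Longrightarrow> DERIV (\<lambda>s. partial i0 u (s *\<^sub>R unitv)) r :> partial i0 (partial i0 u) (r *\<^sub>R unitv)"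
proof -
  fix y :: "real^'n" assume y: "y \<noteq> 0"
  obtain U0 where U0: "\<And>x. x \<noteq> 0 \<Longrightarrow> u x = U0 (norm x)" using rad unfolding radial_def by blast
  have "norm y *\<^sub>R (unitv :: real^'n) \<noteq> 0" using y by (simp add: unitv_axis)
  then have "u (norm y *\<^sub>R unitv) = U0 (norm (norm y *\<^sub>R (unitv :: real^'n)))" by (rule U0)
  also have "\<dots> = U0 (norm y)" by (simp add: unitv_axis)
  finally show "u y = u (norm y *\<^sub>R unitv)" using U0[OF y] by simp
next
  fix r :: real assume r: "r \<noteq> 0"
  have nz: "r *\<^sub>R (unitv :: real^'n) \<in> - {0}" using r by (simp add: unitv_axis)
  have "partial_exists i0 u (r *\<^sub>R unitv)" using C2 nz unfolding C2_on_def by blast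
  then show "DERIV (\<lambda>s. u (s *\<^sub>R unitv)) r :> partial i0 u (r *\<^sub>R unitv)"
    unfolding unitv_axis by (rule along_axis)
  have "partial_exists i0 (partial i0 u) (r *\<^sub>R unitv)" using C2 nz unfolding C2_on_def by blast
  then show "DERIV (\<lambda>s. partial i0 u (s *\<^sub>R unitv)) r :> partial i0 (partial i0 u) (r *\<^sub>R unitv)"
    unfolding unitv_axis by (rule along_axis)
qed

lemma profile_ode:
  fixes u :: "real^'n \<Rightarrow> real"
  assumes C2: "C2_on (- {0}) u" and rad: "radial u" and r: "r > 0"
  shows "laplacian u (r *\<^sub>R unitv) = partial i0 (partial i0 u) (r *\<^sub>R unitv)
           + (real CARD('n) - 1) / r * partial i0 u (r *\<^sub>R unitv)"
proof -
  have nu: "norm (r *\<^sub>R (unitv :: real^'n)) = r" using r by (simp add: unitv_axis)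
  have "laplacian u (r *\<^sub>R unitv) = partial i0 (partial i0 u) (norm (r *\<^sub>R (unitv :: real^'n)) *\<^sub>R unitv)
           + (real CARD('n) - 1) / norm (r *\<^sub>R (unitv :: real^'n)) * partial i0 u (norm (r *\<^sub>R (unitv :: real^'n)) *\<^sub>R unitv)"
  proof (rule lap_radial[where U="\<lambda>s. u (s *\<^sub>R unitv)" and Ud="\<lambda>s. partial i0 u (s *\<^sub>R unitv)"
           and Udd="\<lambda>s. partial i0 (partial i0 u) (s *\<^sub>R unitv)"])
    show "\<And>y. y \<noteq> 0 \<Longrightarrow> u y = u (norm y *\<^sub>R unitv)" by (rule radial_profile(1)[OF C2 rad])
    show "\<And>r. r > 0 \<Longrightarrow> DERIV (\<lambda>s. u (s *\<^sub>R unitv)) r :> partial i0 u (r *\<^sub>R unitv)"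
      using radial_profile(2)[OF C2 rad] by simp
    show "\<And>r. r > 0 \<Longrightarrow> DERIV (\<lambda>s. partial i0 u (s *\<^sub>R unitv)) r :> partial i0 (partial i0 u) (r *\<^sub>R unitv)"
      using radial_profile(3)[OF C2 rad] by simp
    show "r *\<^sub>R (unitv :: real^'n) \<noteq> 0" using r by (simp add: unitv_axis)
  qed
  then show ?thesis unfolding nu .
qed

lemma wbar_eq:
  fixes u :: "real^'n \<Rightarrow> real"
  shows "wbar \<delta> u t = exp ((real CARD('n) - 2 - \<delta>) * t) * u (exp t *\<^sub>R unitv)"
proof -
  have nu: "norm (exp (- t) *\<^sub>R (unitv :: real^'n)) = exp (- t)" by (simp add: unitv_axis)
  have sc: "(1 / (exp (- t))\<^sup>2) *\<^sub>R (exp (- t) *\<^sub>R (unitv :: real^'n)) = exp t *\<^sub>R unitv"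
    by (simp add: exp_minus power2_eq_square field_simps)
  have "wbar \<delta> u t = exp (- \<delta> * t) * (exp (- t) powr (2 - real CARD('n)) * u (exp t *\<^sub>R unitv))"
    unfolding wbar_def kelvin_def nu sc ..
  also have "\<dots> = exp (- \<delta> * t) * exp (- t * (2 - real CARD('n))) * u (exp t *\<^sub>R unitv)"
    by (simp add: exp_powr_real)
  also have "\<dots> = exp ((real CARD('n) - 2 - \<delta>) * t) * u (exp t *\<^sub>R unitv)"
    by (simp add: exp_add[symmetric] algebra_simps)
  finally show ?thesis .
qed

lemma wbar_derivs:
  fixes u :: "real^'n \<Rightarrow> real" and \<delta> t :: real
  assumes C2: "C2_on (- {0}) u" and rad: "radial u"
  defines "m \<equiv> real CARD('n) - 2 - \<delta>"
  defines "U \<equiv> \<lambda>s. u (s *\<^sub>R unitv)"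
  defines "U1 \<equiv> \<lambda>s. partial i0 u (s *\<^sub>R unitv)"
  defines "U2 \<equiv> \<lambda>s. partial i0 (partial i0 u) (s *\<^sub>R unitv)"
  shows "DERIV (wbar \<delta> u) t :> exp (m * t) * (m * U (exp t) + exp t * U1 (exp t))"
    and "DERIV (\<lambda>t. exp (m * t) * (m * U (exp t) + exp t * U1 (exp t))) t :>
           exp (m * t) * (m * (m * U (exp t) + exp t * U1 (exp t)) + m * exp t * U1 (exp t) + exp t * U1 (exp t) + (exp t)\<^sup>2 * U2 (exp t))"
proof -
  have dU: "DERIV U s :> U1 s" if "s \<noteq> 0" for s
    unfolding U_def U1_def using radial_profile(2)[OF C2 rad that] .
  have dU1: "DERIV U1 s :> U2 s" if "s \<noteq> 0" for s
    unfolding U1_def U2_def using radial_profile(3)[OF C2 rad that] .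
  have cU: "DERIV (\<lambda>t. U (exp t)) t :> U1 (exp t) * exp t"
    by (rule DERIV_chain2[OF dU DERIV_exp]) simp
  have cU1: "DERIV (\<lambda>t. U1 (exp t)) t :> U2 (exp t) * exp t"
    by (rule DERIV_chain2[OF dU1 DERIV_exp]) simp
  have we: "wbar \<delta> u = (\<lambda>t. exp (m * t) * U (exp t))"
    by (rule ext) (simp add: wbar_eq m_def U_def)
  have em: "DERIV (\<lambda>t. exp (m * t)) t :> exp (m * t) * m"
  proof -
    have "DERIV (\<lambda>t. m * t) t :> m * 1" by (intro DERIV_cmult DERIV_ident)
    from DERIV_fun_exp[OF this] show ?thesis by simp
  qed
  have "DERIV (\<lambda>t. exp (m * t) * U (exp t)) t :> exp (m * t) * m * U (exp t) + U1 (exp t) * exp t * exp (m * t)"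
    by (rule DERIV_mult[OF em cU])
  then show "DERIV (wbar \<delta> u) t :> exp (m * t) * (m * U (exp t) + exp t * U1 (exp t))"
    unfolding we by (simp add: algebra_simps)
  have inner: "DERIV (\<lambda>t. m * U (exp t) + exp t * U1 (exp t)) t :>
      m * (U1 (exp t) * exp t) + (exp t * U1 (exp t) + U2 (exp t) * exp t * exp t)"
    by (intro DERIV_add DERIV_cmult DERIV_mult[OF DERIV_exp cU1, simplified] cU)
  have "DERIV (\<lambda>t. exp (m * t) * (m * U (exp t) + exp t * U1 (exp t))) t :>
      exp (m * t) * m * (m * U (exp t) + exp t * U1 (exp t)) + (m * (U1 (exp t) * exp t) + (exp t * U1 (exp t) + U2 (exp t) * exp t * exp t)) * exp (m * t)"
    by (rule DERIV_mult[OF em inner])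
  then show "DERIV (\<lambda>t. exp (m * t) * (m * U (exp t) + exp t * U1 (exp t))) t :>
           exp (m * t) * (m * (m * U (exp t) + exp t * U1 (exp t)) + m * exp t * U1 (exp t) + exp t * U1 (exp t) + (exp t)\<^sup>2 * U2 (exp t))"
    by (simp add: algebra_simps power2_eq_square)
qed

lemma ef_identity:
  fixes m N \<sigma> b p q \<mu> \<beta> Uu U1 U2 Vv t :: real
  assumes mp: "m * (p - 1) = 2" and p: "p = 2*q+1" and b: "b = 2*m - (N - 2)" and \<sigma>: "\<sigma> = m * (N - 2 - m)"
    and U2: "U2 = - (N - 1) / exp t * U1 - (\<mu> * Uu powr p + \<beta> * Uu powr q * Vv powr (q+1))"
  shows "exp (m * t) * (m * (m * Uu + exp t * U1) + m * exp t * U1 + exp t * U1 + (exp t)\<^sup>2 * U2)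
    = b * (exp (m * t) * (m * Uu + exp t * U1)) + \<sigma> * (exp (m * t) * Uu)
      - (\<mu> * (exp (m * t) * Uu) powr p + \<beta> * (exp (m * t) * Uu) powr q * (exp (m * t) * Vv) powr (q+1))"
proof -
  have E: "exp (m * t) powr p = exp (m * t) * (exp t)\<^sup>2"
  proof -
    have "m * p = m + 2" using mp by (simp add: algebra_simps)
    then have "m * t * p = m * t + 2 * t" by (metis distrib_right mult.commute mult.left_commute)
    then show ?thesis by (simp add: exp_powr_real exp_add exp_double)
  qed
  have E2: "exp (m * t) powr q * exp (m * t) powr (q+1) = exp (m * t) powr p"
    using p by (simp add: powr_add[symmetric])
  have f: "\<mu> * (exp (m * t) * Uu) powr p + \<beta> * (exp (m * t) * Uu) powr q * (exp (m * t) * Vv) powr (q+1)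
      = exp (m * t) * (exp t)\<^sup>2 * (\<mu> * Uu powr p + \<beta> * Uu powr q * Vv powr (q+1))"
  proof -
    have "\<mu> * (exp (m * t) * Uu) powr p + \<beta> * (exp (m * t) * Uu) powr q * (exp (m * t) * Vv) powr (q+1)
      = exp (m * t) powr p * (\<mu> * Uu powr p) + (exp (m * t) powr q * exp (m * t) powr (q+1)) * (\<beta> * Uu powr q * Vv powr (q+1))"
      by (simp add: powr_mult algebra_simps)
    then show ?thesis unfolding E2 E by (simp add: algebra_simps)
  qed
  have et: "exp t > 0" by simp
  show ?thesis unfolding f U2 b \<sigma> using et
    by (simp add: field_simps power2_eq_square)
qed

theorem lemma4p6:
  fixes u v :: "real^'n \<Rightarrow> real"
    and p q \<mu>\<^sub>1 \<mu>\<^sub>2 \<beta> :: real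
  defines "n \<equiv> real CARD('n)"
  defines "\<alpha> \<equiv> p * (n - 2) - (n + 2)"
  defines "\<delta>\<^sub>0 \<equiv> (2 + \<alpha>) / (p - 1)"
  defines "\<sigma>\<^sub>0 \<equiv> (2 + \<alpha>) * (n - 2) / (p - 1)\<^sup>2 * (p - (n + \<alpha>) / (n - 2))"
  defines "w\<^sub>1 \<equiv> wbar \<delta>\<^sub>0 u"
  defines "w\<^sub>2 \<equiv> wbar \<delta>\<^sub>0 v"
  defines "\<Psi> \<equiv> (\<lambda>t. 1/2 * ((deriv w\<^sub>1 t)\<^sup>2 + (deriv w\<^sub>2 t)\<^sup>2 - \<sigma>\<^sub>0 * ((w\<^sub>1 t)\<^sup>2 + (w\<^sub>2 t)\<^sup>2))
              + 1 / (p + 1) * (\<mu>\<^sub>1 * w\<^sub>1 t powr (p + 1) + 2 * \<beta> * w\<^sub>1 t powr (q + 1) * w\<^sub>2 t powr (q + 1)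
                               + \<mu>\<^sub>2 * w\<^sub>2 t powr (p + 1)))"
  assumes n3: "CARD('n) \<ge> 3"
    and pos: "\<mu>\<^sub>1 > 0" "\<mu>\<^sub>2 > 0" "\<beta> > 0"
    and pq: "p = 2 * q + 1"
    and prange: "n / (n - 2) < p" "p < (n + 2) / (n - 2)"
    and C2: "C2_on (- {0}) u" "C2_on (- {0}) v"
    and rad: "radial u" "radial v"
    and nonneg: "\<forall>x. x \<noteq> 0 \<longrightarrow> u x \<ge> 0 \<and> v x \<ge> 0"
    and eq1: "\<forall>x. x \<noteq> 0 \<longrightarrow>
       - laplacian u x = \<mu>\<^sub>1 * u x powr (2 * q + 1) + \<beta> * u x powr q * v x powr (q + 1)"
    and eq2: "\<forall>x. x \<noteq> 0 \<longrightarrow>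
       - laplacian v x = \<mu>\<^sub>2 * v x powr (2 * q + 1) + \<beta> * v x powr q * u x powr (q + 1)"
  shows "\<exists>L. (\<Psi> \<longlongrightarrow> L) at_top \<and>
           (L = 0 \<or>
            (\<exists>k l. k \<ge> 0 \<and> l \<ge> 0 \<and> (k \<noteq> 0 \<or> l \<noteq> 0) \<and>
               (k > 0 \<and> l > 0 \<longrightarrow>
                  \<mu>\<^sub>1 * k powr (2 * q) + \<beta> * k powr (q - 1) * l powr (q + 1) = 1 \<and>
                  \<mu>\<^sub>2 * l powr (2 * q) + \<beta> * l powr (q - 1) * k powr (q + 1) = 1) \<and>
               (k = 0 \<longrightarrow> \<mu>\<^sub>2 * l powr (2 * q) = 1) \<and>
               (l = 0 \<longrightarrow> \<mu>\<^sub>1 * k powr (2 * q) = 1) \<and>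
               L = - (p - 1) / (2 * (p + 1)) * (k\<^sup>2 + l\<^sup>2) * \<sigma>\<^sub>0 powr ((p + 1) / (p - 1))))"
proof -
  have nn: "n = real CARD('n)" unfolding n_def ..
  have N3: "n \<ge> 3" using n3 n_def by simp
  have N2: "n - 2 > 0" using N3 by simp
  have lo: "n < p * (n - 2)" using prange(1) N2 by (simp add: divide_less_eq)
  have hi: "p * (n - 2) < n + 2" using prange(2) N2 by (simp add: less_divide_eq)
  have p1: "p > 1"
  proof -
    have "1 * (n - 2) < p * (n - 2)" using lo by simp
    then show ?thesis using N2 by (simp only: mult_less_cancel_right)
  qed
  have q0: "q > 0" using pq p1 by simp
  have a2: "2 + \<alpha> > 0" unfolding \<alpha>_def using lo by (simp add: algebra_simps)
  define m where "m = n - 2 - \<delta>\<^sub>0"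
  have mp: "m * (p - 1) = 2"
  proof -
    have "\<delta>\<^sub>0 * (p - 1) = 2 + \<alpha>" unfolding \<delta>\<^sub>0_def using p1 by simp
    then show ?thesis unfolding m_def \<alpha>_def by (simp add: algebra_simps)
  qed
  have mdef: "m = 2 / (p - 1)" using mp p1 by (simp add: field_simps)
  have m0: "m > 0" using mdef p1 by simp
  have \<delta>0: "\<delta>\<^sub>0 > 0" unfolding \<delta>\<^sub>0_def using a2 p1 by simp
  define bb where "bb = 2 * m - (n - 2)"
  have bb0: "bb > 0"
  proof -
    have "(n - 2) * (p - 1) < 4" using hi by (simp add: algebra_simps)
    then have "n - 2 < 4 / (p - 1)" using p1 by (simp add: less_divide_eq)
    then show ?thesis unfolding bb_def mdef by simp
  qed
  have \<sigma>eq: "\<sigma>\<^sub>0 = m * (n - 2 - m)"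
  proof -
    have "n + \<alpha> = p * (n - 2) - 2" unfolding \<alpha>_def by (simp add: algebra_simps)
    then have "p - (n + \<alpha>) / (n - 2) = 2 / (n - 2)" using N2 by (simp add: field_simps)
    then have "\<sigma>\<^sub>0 = (2 + \<alpha>) * (n - 2) / (p - 1)\<^sup>2 * (2 / (n - 2))" unfolding \<sigma>\<^sub>0_def by simp
    also have "\<dots> = 2 * (2 + \<alpha>) / (p - 1)\<^sup>2"
    proof -
      have "n - 2 \<noteq> 0" "(p - 1)\<^sup>2 \<noteq> 0" using N2 p1 by auto
      then show ?thesis by (simp add: field_simps)
    qed
    also have "\<dots> = m * \<delta>\<^sub>0" unfolding mdef \<delta>\<^sub>0_def using p1 by (simp add: field_simps power2_eq_square)
    finally show ?thesis unfolding m_def by simp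
  qed
  have \<sigma>0: "\<sigma>\<^sub>0 > 0" using \<sigma>eq m0 \<delta>0 unfolding m_def by simp
  define Uu where "Uu s = u (s *\<^sub>R unitv)" for s
  define U1 where "U1 s = partial i0 u (s *\<^sub>R unitv)" for s
  define U2 where "U2 s = partial i0 (partial i0 u) (s *\<^sub>R unitv)" for s
  define Vv where "Vv s = v (s *\<^sub>R unitv)" for s
  define V1 where "V1 s = partial i0 v (s *\<^sub>R unitv)" for s
  define V2 where "V2 s = partial i0 (partial i0 v) (s *\<^sub>R unitv)" for s
  define W1' where "W1' t = exp (m * t) * (m * Uu (exp t) + exp t * U1 (exp t))" for t
  define W2' where "W2' t = exp (m * t) * (m * Vv (exp t) + exp t * V1 (exp t))" for t
  define W1'' where "W1'' t = exp (m * t) * (m * (m * Uu (exp t) + exp t * U1 (exp t)) + m * exp t * U1 (exp t) + exp t * U1 (exp t) + (exp t)\<^sup>2 * U2 (exp t))" for t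
  define W2'' where "W2'' t = exp (m * t) * (m * (m * Vv (exp t) + exp t * V1 (exp t)) + m * exp t * V1 (exp t) + exp t * V1 (exp t) + (exp t)\<^sup>2 * V2 (exp t))" for t
  have mm: "m = real CARD('n) - 2 - \<delta>\<^sub>0" unfolding m_def n_def ..
  have w1e: "w\<^sub>1 t = exp (m * t) * Uu (exp t)" for t unfolding w\<^sub>1_def Uu_def mm by (rule wbar_eq)
  have w2e: "w\<^sub>2 t = exp (m * t) * Vv (exp t)" for t unfolding w\<^sub>2_def Vv_def mm by (rule wbar_eq)
  have d1: "DERIV w\<^sub>1 t :> W1' t" for t
    unfolding w\<^sub>1_def W1'_def Uu_def U1_def mm by (rule wbar_derivs(1)[OF C2(1) rad(1)])
  have d2: "DERIV w\<^sub>2 t :> W2' t" for t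
    unfolding w\<^sub>2_def W2'_def Vv_def V1_def mm by (rule wbar_derivs(1)[OF C2(2) rad(2)])
  have dd1: "DERIV W1' t :> W1'' t" for t
    unfolding W1''_def W1'_def Uu_def U1_def U2_def mm by (rule wbar_derivs(2)[OF C2(1) rad(1)])
  have dd2: "DERIV W2' t :> W2'' t" for t
    unfolding W2''_def W2'_def Vv_def V1_def V2_def mm by (rule wbar_derivs(2)[OF C2(2) rad(2)])
  have pos_pt: "exp t *\<^sub>R (unitv :: real^'n) \<noteq> 0" for t by (simp add: unitv_axis)
  have nn1: "w\<^sub>1 t \<ge> 0" for t unfolding w1e Uu_def using nonneg pos_pt by simp
  have nn2: "w\<^sub>2 t \<ge> 0" for t unfolding w2e Vv_def using nonneg pos_pt by simp
  have U2eq: "U2 (exp t) = - (n - 1) / exp t * U1 (exp t) - (\<mu>\<^sub>1 * Uu (exp t) powr p + \<beta> * Uu (exp t) powr q * Vv (exp t) powr (q+1))" for t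
  proof -
    have "laplacian u (exp t *\<^sub>R unitv) = U2 (exp t) + (n - 1) / exp t * U1 (exp t)"
      unfolding U2_def U1_def nn by (rule profile_ode[OF C2(1) rad(1)]) simp
    moreover have "- laplacian u (exp t *\<^sub>R unitv) = \<mu>\<^sub>1 * Uu (exp t) powr p + \<beta> * Uu (exp t) powr q * Vv (exp t) powr (q+1)"
      using eq1 pos_pt[of t] unfolding Uu_def Vv_def pq by simp
    ultimately have "U2 (exp t) = - ((n - 1) / exp t * U1 (exp t)) - (\<mu>\<^sub>1 * Uu (exp t) powr p + \<beta> * Uu (exp t) powr q * Vv (exp t) powr (q+1))"
      by linarith
    then show ?thesis by (simp only: minus_divide_left[symmetric] mult_minus_left)
  qed
  have V2eq: "V2 (exp t) = - (n - 1) / exp t * V1 (exp t) - (\<mu>\<^sub>2 * Vv (exp t) powr p + \<beta> * Vv (exp t) powr q * Uu (exp t) powr (q+1))" for t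
  proof -
    have "laplacian v (exp t *\<^sub>R unitv) = V2 (exp t) + (n - 1) / exp t * V1 (exp t)"
      unfolding V2_def V1_def nn by (rule profile_ode[OF C2(2) rad(2)]) simp
    moreover have "- laplacian v (exp t *\<^sub>R unitv) = \<mu>\<^sub>2 * Vv (exp t) powr p + \<beta> * Vv (exp t) powr q * Uu (exp t) powr (q+1)"
      using eq2 pos_pt[of t] unfolding Uu_def Vv_def pq by simp
    ultimately have "V2 (exp t) = - ((n - 1) / exp t * V1 (exp t)) - (\<mu>\<^sub>2 * Vv (exp t) powr p + \<beta> * Vv (exp t) powr q * Uu (exp t) powr (q+1))"
      by linarith
    then show ?thesis by (simp only: minus_divide_left[symmetric] mult_minus_left)
  qed
  have o1: "W1'' t = bb * W1' t + \<sigma>\<^sub>0 * w\<^sub>1 t - (\<mu>\<^sub>1 * w\<^sub>1 t powr p + \<beta> * w\<^sub>1 t powr q * w\<^sub>2 t powr (q+1))" for t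
    unfolding W1''_def W1'_def w1e w2e
    by (rule ef_identity[OF mp _ bb_def \<sigma>eq U2eq]) (use pq in simp)
  have o2: "W2'' t = bb * W2' t + \<sigma>\<^sub>0 * w\<^sub>2 t - (\<mu>\<^sub>2 * w\<^sub>2 t powr p + \<beta> * w\<^sub>2 t powr q * w\<^sub>1 t powr (q+1))" for t
    unfolding W2''_def W2'_def w1e w2e
    by (rule ef_identity[OF mp _ bb_def \<sigma>eq V2eq]) (use pq in simp)
  have pq': "p = 2*q+1" using pq by simp
  have dw1: "deriv w\<^sub>1 t = W1' t" for t by (rule DERIV_imp_deriv[OF d1])
  have dw2: "deriv w\<^sub>2 t = W2' t" for t by (rule DERIV_imp_deriv[OF d2])
  have Psi_eq: "\<Psi> = (\<lambda>t. 1/2 * ((W1' t)\<^sup>2 + (W2' t)\<^sup>2 - \<sigma>\<^sub>0 * ((w\<^sub>1 t)\<^sup>2 + (w\<^sub>2 t)\<^sup>2)) + 1/(p+1) * (\<mu>\<^sub>1 * w\<^sub>1 t powr (p+1) + 2*\<beta> * w\<^sub>1 t powr (q+1) * w\<^sub>2 t powr (q+1) + \<mu>\<^sub>2 * w\<^sub>2 t powr (p+1)))"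
    unfolding \<Psi>_def dw1 dw2 ..
  show ?thesis unfolding Psi_eq
    by (rule ode_main[OF bb0 \<sigma>0 pos q0 pq' nn1 nn2 d1 d2 dd1 dd2 o1 o2])
qed

end
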